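(* Let $R$ be a commutative unital ring with $\operatorname{sr}(R) \le 2$ and let $I$ be an ideal of $R$. Then the natural map $\operatorname{SK}_1(R) \to \operatorname{SK}_1(R/I)$ is surjective.
   Context: The Bass stable rank: a row $(r_1,\dots,r_n)\in R^n$ is unimodular if $\sum_i Rr_i=R$; a unimodular row $(r_1,\dots,r_{n+1})$ is stable if there exist $s_i\in R$ with $(r_1+s_1r_{n+1},\dots,r_n+s_nr_{n+1})$ unimodular; $\operatorname{sr}(R)$ is the least $n>0$ such that every unimodular row of length $n+1$ is stable. $\operatorname{E}_n(R)$ is the subgroup of $\operatorname{SL}_n(R)$ generated by elementary matrices $I_n + a\epsilon_{ij}$ ($a\in R$, $i\ne j$). $\operatorname{SL}(R)=\bigcup_n\operatorname{SL}_n(R)$ and $\operatorname{E}(R)=\bigcup_n\operatorname{E}_n(R)$ via the embeddings $A\mapsto\begin{pmatrix}A&0\\0&1\end{pmatrix}$; $\operatorname{E}(R)$ is normal in $\operatorname{SL}(R)$ and $\operatorname{SK}_1(R)=\operatorname{SL}(R)/\operatorname{E}(R)$. *)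

theory Defs
  imports "HOL-Algebra.Algebra" "HOL-Combinatorics.Permutations" "HOL-Library.Extended_Nat"
begin

text \<open>A row of length n is a function nat => 'a, only indices below n matter.
  It is unimodular if the sum of the principal ideals R r_i is R, i.e. 1 is an
  R-linear combination of the r_i.\<close>

definition unimodular :: "('a, 'b) ring_scheme \<Rightarrow> nat \<Rightarrow> (nat \<Rightarrow> 'a) \<Rightarrow> bool" where
  "unimodular R n r \<longleftrightarrow>
     (\<forall>i<n. r i \<in> carrier R) \<and>
     (\<exists>s. (\<forall>i<n. s i \<in> carrier R) \<and>
          finsum R (\<lambda>i. s i \<otimes>\<^bsub>R\<^esub> r i) {..<n} = \<one>\<^bsub>R\<^esub>)"

definition stable_row :: "('a, 'b) ring_scheme \<Rightarrow> nat \<Rightarrow> (nat \<Rightarrow> 'a) \<Rightarrow> bool" where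
  "stable_row R n r \<longleftrightarrow>
     (\<exists>s. (\<forall>i<n. s i \<in> carrier R) \<and>
          unimodular R n (\<lambda>i. r i \<oplus>\<^bsub>R\<^esub> s i \<otimes>\<^bsub>R\<^esub> r n))"

definition sr_cond :: "('a, 'b) ring_scheme \<Rightarrow> nat \<Rightarrow> bool" where
  "sr_cond R n \<longleftrightarrow> (\<forall>r. unimodular R (Suc n) r \<longrightarrow> stable_row R n r)"

definition sr :: "('a, 'b) ring_scheme \<Rightarrow> enat" where
  "sr R = (if \<exists>n>0. sr_cond R n then enat (LEAST n. n > 0 \<and> sr_cond R n) else \<infinity>)"

text \<open>An n x n matrix A is
  represented by the infinite matrix diag(A, 1, 1, ...); thus the embeddings
  SL_n(R) into SL_{n+1}(R), A |-> diag(A,1), become inclusions, and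
  SL(R) is literally the union of the SL_n(R).\<close>

definition idm :: "('a, 'b) ring_scheme \<Rightarrow> nat \<Rightarrow> nat \<Rightarrow> 'a" where
  "idm R i j = (if i = j then \<one>\<^bsub>R\<^esub> else \<zero>\<^bsub>R\<^esub>)"

definition is_mat :: "('a, 'b) ring_scheme \<Rightarrow> nat \<Rightarrow> (nat \<Rightarrow> nat \<Rightarrow> 'a) \<Rightarrow> bool" where
  "is_mat R n A \<longleftrightarrow> (\<forall>i j. A i j \<in> carrier R) \<and>
                     (\<forall>i j. (n \<le> i \<or> n \<le> j) \<longrightarrow> A i j = idm R i j)"

definition mat_mult :: "('a, 'b) ring_scheme \<Rightarrow> nat \<Rightarrow> (nat \<Rightarrow> nat \<Rightarrow> 'a) \<Rightarrow> (nat \<Rightarrow> nat \<Rightarrow> 'a) \<Rightarrow> nat \<Rightarrow> nat \<Rightarrow> 'a" where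
  "mat_mult R n A B i j =
     (if i < n \<and> j < n then finsum R (\<lambda>k. A i k \<otimes>\<^bsub>R\<^esub> B k j) {..<n} else idm R i j)"

definition det :: "('a, 'b) ring_scheme \<Rightarrow> nat \<Rightarrow> (nat \<Rightarrow> nat \<Rightarrow> 'a) \<Rightarrow> 'a" where
  "det R n A =
     finsum R (\<lambda>p. (if evenperm p then \<one>\<^bsub>R\<^esub> else \<ominus>\<^bsub>R\<^esub> \<one>\<^bsub>R\<^esub>) \<otimes>\<^bsub>R\<^esub>
                    finprod R (\<lambda>i. A i (p i)) {..<n})
       {p. p permutes {..<n}}"

definition SL :: "('a, 'b) ring_scheme \<Rightarrow> nat \<Rightarrow> (nat \<Rightarrow> nat \<Rightarrow> 'a) set" where
  "SL R n = {A. is_mat R n A \<and> det R n A = \<one>\<^bsub>R\<^esub>}"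

definition SL_grp :: "('a, 'b) ring_scheme \<Rightarrow> nat \<Rightarrow> (nat \<Rightarrow> nat \<Rightarrow> 'a) monoid" where
  "SL_grp R n = \<lparr>carrier = SL R n, monoid.mult = mat_mult R n, one = idm R\<rparr>"

definition elem :: "('a, 'b) ring_scheme \<Rightarrow> nat \<Rightarrow> nat \<Rightarrow> 'a \<Rightarrow> nat \<Rightarrow> nat \<Rightarrow> 'a" where
  "elem R i j a k l = (if k = i \<and> l = j then idm R k l \<oplus>\<^bsub>R\<^esub> a else idm R k l)"

definition E :: "('a, 'b) ring_scheme \<Rightarrow> nat \<Rightarrow> (nat \<Rightarrow> nat \<Rightarrow> 'a) set" where
  "E R n = generate (SL_grp R n)
             {elem R i j a | i j a. i < n \<and> j < n \<and> i \<noteq> j \<and> a \<in> carrier R}"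

definition SL_all :: "('a, 'b) ring_scheme \<Rightarrow> (nat \<Rightarrow> nat \<Rightarrow> 'a) set" where
  "SL_all R = (\<Union>n. SL R n)"

definition E_all :: "('a, 'b) ring_scheme \<Rightarrow> (nat \<Rightarrow> nat \<Rightarrow> 'a) set" where
  "E_all R = (\<Union>n. E R n)"

text \<open>Product in SL(R): multiply in SL_n(R) for any n containing both matrices
  (the result does not depend on the choice of such n); we take the least one.\<close>

definition stab_mult :: "('a, 'b) ring_scheme \<Rightarrow> (nat \<Rightarrow> nat \<Rightarrow> 'a) \<Rightarrow> (nat \<Rightarrow> nat \<Rightarrow> 'a) \<Rightarrow> nat \<Rightarrow> nat \<Rightarrow> 'a" where
  "stab_mult R A B = mat_mult R (LEAST n. A \<in> SL R n \<and> B \<in> SL R n) A B"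

definition SL_stab :: "('a, 'b) ring_scheme \<Rightarrow> (nat \<Rightarrow> nat \<Rightarrow> 'a) monoid" where
  "SL_stab R = \<lparr>carrier = SL_all R, monoid.mult = stab_mult R, one = idm R\<rparr>"

definition SK1 :: "('a, 'b) ring_scheme \<Rightarrow> (nat \<Rightarrow> nat \<Rightarrow> 'a) set monoid" where
  "SK1 R = SL_stab R Mod E_all R"

definition reduce :: "('a, 'b) ring_scheme \<Rightarrow> 'a set \<Rightarrow> (nat \<Rightarrow> nat \<Rightarrow> 'a) \<Rightarrow> nat \<Rightarrow> nat \<Rightarrow> 'a set" where
  "reduce R I A i j = I +>\<^bsub>R\<^esub> A i j"

definition SK1_map :: "('a, 'b) ring_scheme \<Rightarrow> 'a set \<Rightarrow> (nat \<Rightarrow> nat \<Rightarrow> 'a) set \<Rightarrow> (nat \<Rightarrow> nat \<Rightarrow> 'a set) set" where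
  "SK1_map R I C = r_coset (SL_stab (FactRing R I)) (E_all (FactRing R I)) (reduce R I (SOME A. A \<in> C))"

end

theory Submission
  imports Defs
begin


context cring
begin

lemma idm_carrier[simp]: "idm R i j \<in> carrier R"
  by (simp add: idm_def)

lemma idm_is_mat[simp]: "is_mat R n (idm R)"
  by (simp add: is_mat_def)

lemma is_mat_carrier[simp]: "is_mat R n A \<Longrightarrow> A i j \<in> carrier R"
  by (simp add: is_mat_def)

lemma is_mat_out1: "is_mat R n A \<Longrightarrow> n \<le> i \<Longrightarrow> A i j = idm R i j"
  by (simp add: is_mat_def)
lemma is_mat_out2: "is_mat R n A \<Longrightarrow> n \<le> j \<Longrightarrow> A i j = idm R i j"
  by (simp add: is_mat_def)

lemma is_mat_mono: "is_mat R n A \<Longrightarrow> n \<le> m \<Longrightarrow> is_mat R m A"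
  by (auto simp: is_mat_def)

lemma finsum_delta1:
  assumes "i < n" "\<And>k. f k \<in> carrier R"
  shows "(\<Oplus>k\<in>{..<n}. idm R i k \<otimes> f k) = f i"
proof -
  have "(\<Oplus>k\<in>{..<n}. idm R i k \<otimes> f k) = (\<Oplus>k\<in>{..<n}. if i = k then f k else \<zero>)"
    by (rule finsum_cong') (auto simp: idm_def assms)
  also have "\<dots> = f i" using assms by (intro finsum_singleton) auto
  finally show ?thesis .
qed

lemma finsum_delta2:
  assumes "j < n" "\<And>k. f k \<in> carrier R"
  shows "(\<Oplus>k\<in>{..<n}. f k \<otimes> idm R k j) = f j"
proof -
  have "(\<Oplus>k\<in>{..<n}. f k \<otimes> idm R k j) = (\<Oplus>k\<in>{..<n}. if j = k then f k else \<zero>)"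
    by (rule finsum_cong') (auto simp: idm_def assms)
  also have "\<dots> = f j" using assms by (intro finsum_singleton) auto
  finally show ?thesis .
qed

lemma finsum_zero_outside:
  assumes "\<And>k. k \<in> B - A \<Longrightarrow> f k = \<zero>" "A \<subseteq> B" "finite B" "\<And>k. f k \<in> carrier R"
  shows "finsum R f B = finsum R f A"
  using assms by (intro add.finprod_mono_neutral_cong_left[symmetric]) auto

lemma mat_mult_is_mat[simp]:
  assumes "is_mat R n A" "is_mat R n B"
  shows "is_mat R n (mat_mult R n A B)"
  using assms by (auto simp: is_mat_def mat_mult_def intro!: finsum_closed)

lemma mat_mult_carrier[simp]:
  assumes "\<And>i j. A i j \<in> carrier R" "\<And>i j. B i j \<in> carrier R"
  shows "mat_mult R n A B i j \<in> carrier R"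
  using assms by (auto simp: mat_mult_def intro!: finsum_closed)

lemma mat_mult_out: "\<not> (i < n \<and> j < n) \<Longrightarrow> mat_mult R n A B i j = idm R i j"
  by (auto simp: mat_mult_def)

lemma mat_mult_in: "i < n \<Longrightarrow> j < n \<Longrightarrow> mat_mult R n A B i j = (\<Oplus>k\<in>{..<n}. A i k \<otimes> B k j)"
  by (simp add: mat_mult_def)

lemma mat_mult_indep:
  assumes A: "is_mat R n A" and B: "is_mat R n B" and nm: "n \<le> m"
  shows "mat_mult R m A B = mat_mult R n A B"
proof (intro ext)
  fix i j
  show "mat_mult R m A B i j = mat_mult R n A B i j"
  proof (cases "i < n \<and> j < n")
    case True
    have z: "A i k \<otimes> B k j = \<zero>" if "k \<in> {..<m} - {..<n}" for k
    proof -
      have "A i k = idm R i k" using that is_mat_out2[OF A, of k i] by auto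
      then show ?thesis using True that B by (simp add: idm_def)
    qed
    have "(\<Oplus>k\<in>{..<m}. A i k \<otimes> B k j) = (\<Oplus>k\<in>{..<n}. A i k \<otimes> B k j)"
      using A B nm by (intro finsum_zero_outside z) auto
    then show ?thesis using True nm by (simp add: mat_mult_def)
  next
    case False
    show ?thesis
    proof (cases "i < m \<and> j < m")
      case True2: True
      show ?thesis
      proof (cases "n \<le> i")
        case True
        have Ai: "A i k = idm R i k" for k using is_mat_out1[OF A True] .
        have "(\<Oplus>k\<in>{..<m}. A i k \<otimes> B k j) = B i j"
          using True2 A B by (simp add: Ai finsum_delta1)
        also have "B i j = idm R i j" using is_mat_out1[OF B True] .
        finally show ?thesis using False True2 by (auto simp: mat_mult_def)
      next
        case False3: False
        then have nj: "n \<le> j" using False by auto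
        have Bj: "B k j = idm R k j" for k using is_mat_out2[OF B nj] .
        have "(\<Oplus>k\<in>{..<m}. A i k \<otimes> B k j) = A i j"
          using True2 A B by (simp add: Bj finsum_delta2)
        also have "A i j = idm R i j" using is_mat_out2[OF A nj] .
        finally show ?thesis using False True2 by (auto simp: mat_mult_def)
      qed
    next
      case False2: False
      then show ?thesis using False nm by (auto simp: mat_mult_def)
    qed
  qed
qed

lemma mat_mult_idm_left[simp]:
  assumes "is_mat R n A" shows "mat_mult R n (idm R) A = A"
proof (intro ext)
  fix i j show "mat_mult R n (idm R) A i j = A i j"
    using assms by (auto simp: mat_mult_def finsum_delta1 is_mat_def)
qed

lemma mat_mult_idm_right[simp]:
  assumes "is_mat R n A" shows "mat_mult R n A (idm R) = A"
proof (intro ext)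
  fix i j show "mat_mult R n A (idm R) i j = A i j"
    using assms by (auto simp: mat_mult_def finsum_delta2 is_mat_def)
qed

lemma finsum_swap:
  assumes "\<And>i j. f i j \<in> carrier R"
  shows "(\<Oplus>i\<in>{..<(n::nat)}. \<Oplus>j\<in>{..<(m::nat)}. f i j) = (\<Oplus>j\<in>{..<m}. \<Oplus>i\<in>{..<n}. f i j)"
proof (induction n)
  case 0
  then show ?case by (simp add: finsum_zero)
next
  case (Suc n)
  have "(\<Oplus>i\<in>{..<Suc n}. \<Oplus>j\<in>{..<m}. f i j) = (\<Oplus>j\<in>{..<m}. f n j) \<oplus> (\<Oplus>i\<in>{..<n}. \<Oplus>j\<in>{..<m}. f i j)"
    using assms by (simp add: lessThan_Suc finsum_insert Pi_def finsum_closed)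
  also have "\<dots> = (\<Oplus>j\<in>{..<m}. f n j) \<oplus> (\<Oplus>j\<in>{..<m}. \<Oplus>i\<in>{..<n}. f i j)" using Suc by simp
  also have "\<dots> = (\<Oplus>j\<in>{..<m}. f n j \<oplus> (\<Oplus>i\<in>{..<n}. f i j))"
    using assms by (simp add: finsum_addf Pi_def finsum_closed)
  also have "\<dots> = (\<Oplus>j\<in>{..<m}. \<Oplus>i\<in>{..<Suc n}. f i j)"
    using assms by (intro finsum_cong') (auto simp: lessThan_Suc finsum_insert Pi_def finsum_closed)
  finally show ?case .
qed

lemma mat_mult_assoc:
  assumes A: "is_mat R n A" and B: "is_mat R n B" and C: "is_mat R n C"
  shows "mat_mult R n (mat_mult R n A B) C = mat_mult R n A (mat_mult R n B C)"
proof (intro ext)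
  fix i j
  show "mat_mult R n (mat_mult R n A B) C i j = mat_mult R n A (mat_mult R n B C) i j"
  proof (cases "i < n \<and> j < n")
    case True
    have "(\<Oplus>k\<in>{..<n}. mat_mult R n A B i k \<otimes> C k j) = (\<Oplus>k\<in>{..<n}. \<Oplus>l\<in>{..<n}. A i l \<otimes> B l k \<otimes> C k j)"
      using True A B C by (intro finsum_cong') (auto simp: mat_mult_def finsum_ldistr Pi_def)
    also have "\<dots> = (\<Oplus>l\<in>{..<n}. \<Oplus>k\<in>{..<n}. A i l \<otimes> B l k \<otimes> C k j)"
      using A B C by (intro finsum_swap) simp
    also have "\<dots> = (\<Oplus>l\<in>{..<n}. A i l \<otimes> mat_mult R n B C l j)"
      using True A B C by (intro finsum_cong') (auto simp: mat_mult_def finsum_rdistr Pi_def m_assoc)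
    finally show ?thesis using True by (simp add: mat_mult_def)
  next
    case False
    then show ?thesis by (simp add: mat_mult_out)
  qed
qed

end


context cring
begin

lemma elem_carrier[simp]: "a \<in> carrier R \<Longrightarrow> elem R i j a k l \<in> carrier R"
  by (simp add: elem_def)

lemma elem_is_mat[simp]: "i < n \<Longrightarrow> j < n \<Longrightarrow> a \<in> carrier R \<Longrightarrow> is_mat R n (elem R i j a)"
  by (auto simp: is_mat_def elem_def)

lemma elem_mult:
  assumes M: "is_mat R n M" and ij: "i < n" "j < n" "i \<noteq> j" and a: "a \<in> carrier R"
  shows "mat_mult R n (elem R i j a) M = (\<lambda>k l. if k = i \<and> l < n then M i l \<oplus> a \<otimes> M j l else M k l)"
proof (intro ext)
  fix k l
  show "mat_mult R n (elem R i j a) M k l = (if k = i \<and> l < n then M i l \<oplus> a \<otimes> M j l else M k l)"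
  proof (cases "k < n \<and> l < n")
    case True
    show ?thesis
    proof (cases "k = i")
      case True2: True
      have "(\<Oplus>t\<in>{..<n}. elem R i j a k t \<otimes> M t l) =
            (\<Oplus>t\<in>{..<n}. idm R i t \<otimes> M t l \<oplus> (if j = t then a \<otimes> M t l else \<zero>))"
        using M a True2 ij by (intro finsum_cong') (auto simp: elem_def idm_def l_distr)
      also have "\<dots> = (\<Oplus>t\<in>{..<n}. idm R i t \<otimes> M t l) \<oplus> (\<Oplus>t\<in>{..<n}. (if j = t then a \<otimes> M t l else \<zero>))"
        using M a by (intro finsum_addf) (auto simp: Pi_def)
      also have "\<dots> = M i l \<oplus> a \<otimes> M j l"
        using M a ij by (simp add: finsum_delta1 finsum_singleton)
      finally show ?thesis using True True2 by (simp add: mat_mult_in)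
    next
      case False
      have "(\<Oplus>t\<in>{..<n}. elem R i j a k t \<otimes> M t l) = (\<Oplus>t\<in>{..<n}. idm R k t \<otimes> M t l)"
        using M a False by (intro finsum_cong') (auto simp: elem_def)
      also have "\<dots> = M k l" using M True by (simp add: finsum_delta1)
      finally show ?thesis using True False by (simp add: mat_mult_in)
    qed
  next
    case False
    then have "M k l = idm R k l" using M by (auto simp: is_mat_def)
    then show ?thesis using False ij by (auto simp: mat_mult_out)
  qed
qed

definition sgnp :: "(nat \<Rightarrow> nat) \<Rightarrow> 'a" where
  "sgnp p = (if evenperm p then \<one> else \<ominus> \<one>)"

lemma sgnp_carrier[simp]: "sgnp p \<in> carrier R"
  by (simp add: sgnp_def)

lemma det_alt: "det R n A = (\<Oplus>p\<in>{p. p permutes {..<n}}. sgnp p \<otimes> (\<Otimes>i\<in>{..<n}. A i (p i)))"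
  by (simp add: det_def sgnp_def)

lemma perm_lt: "p permutes {..<n} \<Longrightarrow> i < n \<Longrightarrow> p i < n"
  using permutes_in_image[of p "{..<n}" i] by simp

lemma det_carrier[simp]:
  assumes "\<And>i j. A i j \<in> carrier R" shows "det R n A \<in> carrier R"
  using assms by (simp add: det_alt Pi_def finsum_closed finprod_closed)

lemma det_cong:
  assumes "\<And>i j. i < n \<Longrightarrow> j < n \<Longrightarrow> A i j = B i j" "\<And>i j. B i j \<in> carrier R"
  shows "det R n A = det R n B"
  unfolding det_alt
proof (rule finsum_cong')
  fix p assume "p \<in> {p. p permutes {..<n}}"
  then have p: "p permutes {..<n}" by simp
  have "(\<Otimes>i\<in>{..<n}. A i (p i)) = (\<Otimes>i\<in>{..<n}. B i (p i))"
    using assms perm_lt[OF p] by (intro finprod_cong') auto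
  then show "sgnp p \<otimes> (\<Otimes>i\<in>{..<n}. A i (p i)) = sgnp p \<otimes> (\<Otimes>i\<in>{..<n}. B i (p i))" by simp
qed (use assms in \<open>auto simp: Pi_def\<close>)

lemma finprod_split:
  assumes "finite A" "i \<in> A" "f \<in> A \<rightarrow> carrier R"
  shows "finprod R f A = f i \<otimes> finprod R f (A - {i})"
proof -
  have "finprod R f A = finprod R f (insert i (A - {i}))" using assms by (simp add: insert_absorb)
  also have "\<dots> = f i \<otimes> finprod R f (A - {i})"
    by (rule finprod_insert) (use assms in auto)
  finally show ?thesis .
qed

lemma finprod_zero_factor:
  assumes "finite A" "i \<in> A" "f \<in> A \<rightarrow> carrier R" "f i = \<zero>"
  shows "finprod R f A = \<zero>"
  using finprod_split[OF assms(1-3)] assms by (simp add: Pi_def finprod_closed)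

lemma perm_hits:
  assumes p: "p permutes {..<Suc n}" and pn: "p n \<noteq> n"
  shows "\<exists>i<n. p i = n"
proof -
  obtain i where i: "p i = n" using permutes_surj[OF p] by (metis surjD)
  have "i < Suc n"
  proof (rule ccontr)
    assume "\<not> i < Suc n"
    then have "p i = i" using permutes_not_in[OF p] by simp
    then show False using i \<open>\<not> i < Suc n\<close> by simp
  qed
  moreover have "i \<noteq> n" using i pn by auto
  ultimately have "i < n" by simp
  then show ?thesis using i by blast
qed

lemma det_last:
  assumes M: "\<And>i j. M i j \<in> carrier R" and z: "\<And>i. i < n \<Longrightarrow> M i n = \<zero>" and o: "M n n = \<one>"
  shows "det R (Suc n) M = det R n M"
proof -
  let ?f = "\<lambda>m p. sgnp p \<otimes> (\<Otimes>i\<in>{..<m}. M i (p i))"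
  have sub: "{p. p permutes {..<n}} \<subseteq> {p. p permutes {..<Suc n}}"
    by (auto intro: permutes_subset)
  have "det R (Suc n) M = (\<Oplus>p\<in>{p. p permutes {..<Suc n}}. ?f (Suc n) p)" by (simp add: det_alt)
  also have "\<dots> = (\<Oplus>p\<in>{p. p permutes {..<n}}. ?f (Suc n) p)"
  proof (rule finsum_zero_outside)
    fix p assume "p \<in> {p. p permutes {..<Suc n}} - {p. p permutes {..<n}}"
    then have p: "p permutes {..<Suc n}" and np: "\<not> p permutes {..<n}" by auto
    have "p n \<noteq> n"
    proof
      assume "p n = n"
      then have "transpose n (p n) \<circ> p = p" by simp
      moreover have "transpose n (p n) \<circ> p permutes {..<n}"
        using permutes_insert_lemma[of p n "{..<n}"] p by (simp add: lessThan_Suc)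
      ultimately show False using np by simp
    qed
    then obtain i0 where i0: "i0 < n" "p i0 = n" using perm_hits[OF p] by auto
    have "(\<Otimes>i\<in>{..<Suc n}. M i (p i)) = \<zero>"
      using i0 M z by (intro finprod_zero_factor[where i=i0]) auto
    then show "?f (Suc n) p = \<zero>" by simp
  qed (use sub M in \<open>auto simp: finite_permutations Pi_def finprod_closed\<close>)
  also have "\<dots> = (\<Oplus>p\<in>{p. p permutes {..<n}}. ?f n p)"
  proof (rule finsum_cong')
    fix p assume "p \<in> {p. p permutes {..<n}}"
    then have p: "p permutes {..<n}" by simp
    have pn: "p n = n" using permutes_not_in[OF p] by simp
    have "(\<Otimes>i\<in>{..<Suc n}. M i (p i)) = M n (p n) \<otimes> (\<Otimes>i\<in>{..<n}. M i (p i))"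
      using M by (simp add: lessThan_Suc finprod_insert Pi_def)
    also have "\<dots> = (\<Otimes>i\<in>{..<n}. M i (p i))" using pn o M by (simp add: Pi_def finprod_closed)
    finally show "?f (Suc n) p = ?f n p" by simp
  qed (use M in \<open>auto simp: Pi_def finprod_closed\<close>)
  also have "\<dots> = det R n M" by (simp add: det_alt)
  finally show ?thesis .
qed

lemma det_zero_idm: "det R 0 A = \<one>"
  by (simp add: det_alt sgnp_def)

lemma det_idm[simp]: "det R n (idm R) = \<one>"
proof (induction n)
  case 0 then show ?case by (rule det_zero_idm)
next
  case (Suc n)
  have "det R (Suc n) (idm R) = det R n (idm R)"
    by (rule det_last) (auto simp: idm_def)
  then show ?case using Suc by simp
qed

end


context cring
begin

lemma det_alternating:
  assumes B: "\<And>k l. B k l \<in> carrier R" and ij: "i < n" "j < n" "i \<noteq> j"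
    and rows: "\<And>l. B i l = B j l"
  shows "det R n B = \<zero>"
proof -
  define \<tau> where "\<tau> = transpose i j"
  define f where "f = (\<lambda>p. sgnp p \<otimes> (\<Otimes>k\<in>{..<n}. B k (p k)))"
  define P where "P = {p. p permutes {..<n}}"
  define Pe where "Pe = {p \<in> P. evenperm p}"
  define Po where "Po = {p \<in> P. \<not> evenperm p}"
  have finP: "finite P" by (simp add: P_def finite_permutations)
  have \<tau>P: "\<tau> permutes {..<n}" using ij by (simp add: \<tau>_def permutes_swap_id)
  have \<tau>perm: "permutation \<tau>" using \<tau>P by (intro permutes_imp_permutation) auto
  have \<tau>odd: "\<not> evenperm \<tau>" using ij by (simp add: \<tau>_def evenperm_swap)
  have \<tau>\<tau>: "\<tau> \<circ> \<tau> = id" by (simp add: \<tau>_def)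
  have fc: "f p \<in> carrier R" for p using B by (simp add: f_def Pi_def finprod_closed)
  have key: "f (p \<circ> \<tau>) = \<ominus> f p" if p: "p \<in> P" for p
  proof -
    have pP: "p permutes {..<n}" using p by (simp add: P_def)
    have pperm: "permutation p" using pP by (intro permutes_imp_permutation) auto
    have ev: "evenperm (p \<circ> \<tau>) = (\<not> evenperm p)"
      using evenperm_comp[OF pperm \<tau>perm] \<tau>odd by simp
    define g where "g = (\<lambda>k. B (\<tau> k) (p k))"
    have brow: "B (\<tau> k) = B k" for k
    proof (rule ext)
      fix l
      show "B (\<tau> k) l = B k l"
        unfolding \<tau>_def using rows[of l] by (cases "k = i"; cases "k = j") auto
    qed
    have tt: "\<tau> (\<tau> k) = k" for k by (simp add: \<tau>_def)
    have img: "\<tau> ` {..<n} = {..<n}" using \<tau>P by (rule permutes_image)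
    have injt: "inj_on \<tau> {..<n}" by (simp add: \<tau>_def)
    have "(\<Otimes>k\<in>{..<n}. B k ((p \<circ> \<tau>) k)) = (\<Otimes>k\<in>{..<n}. g (\<tau> k))"
      using B tt by (intro finprod_cong') (auto simp: g_def Pi_def)
    also have "\<dots> = finprod R g (\<tau> ` {..<n})"
      using B by (intro finprod_reindex[symmetric] injt) (auto simp: g_def Pi_def)
    also have "\<dots> = (\<Otimes>k\<in>{..<n}. B k (p k))"
      unfolding img g_def brow ..
    finally have pr: "(\<Otimes>k\<in>{..<n}. B k ((p \<circ> \<tau>) k)) = (\<Otimes>k\<in>{..<n}. B k (p k))" .
    have Q: "(\<Otimes>k\<in>{..<n}. B k (p k)) \<in> carrier R" using B by (simp add: Pi_def finprod_closed)
    show ?thesis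
      unfolding f_def pr using ev Q by (simp add: sgnp_def l_minus)
  qed
  have evc: "evenperm (p \<circ> \<tau>) = (\<not> evenperm p)" if "p \<in> P" for p
  proof -
    have pperm: "permutation p" using that by (intro permutes_imp_permutation[of "{..<n}"]) (auto simp: P_def)
    show ?thesis using evenperm_comp[OF pperm \<tau>perm] \<tau>odd by simp
  qed
  have ptP: "p \<circ> \<tau> \<in> P" if "p \<in> P" for p
    using permutes_compose[OF \<tau>P, of p] that by (simp add: P_def)
  have PeP: "p \<circ> \<tau> \<in> Po" if "p \<in> Pe" for p
    using that evc ptP by (auto simp: Pe_def Po_def)
  have PoP: "p \<circ> \<tau> \<in> Pe" if "p \<in> Po" for p
    using that evc ptP by (auto simp: Pe_def Po_def)
  have img: "(\<lambda>p. p \<circ> \<tau>) ` Pe = Po"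
  proof
    show "(\<lambda>p. p \<circ> \<tau>) ` Pe \<subseteq> Po" using PeP by auto
    show "Po \<subseteq> (\<lambda>p. p \<circ> \<tau>) ` Pe"
    proof
      fix q assume q: "q \<in> Po"
      have "q = (q \<circ> \<tau>) \<circ> \<tau>" using \<tau>\<tau> by (simp add: comp_assoc)
      then show "q \<in> (\<lambda>p. p \<circ> \<tau>) ` Pe" using PoP[OF q] by blast
    qed
  qed
  have inj: "inj_on (\<lambda>p. p \<circ> \<tau>) Pe"
  proof (rule inj_onI)
    fix p q assume "p \<circ> \<tau> = q \<circ> \<tau>"
    then have "(p \<circ> \<tau>) \<circ> \<tau> = (q \<circ> \<tau>) \<circ> \<tau>" by simp
    then show "p = q" using \<tau>\<tau> by (simp add: comp_assoc)
  qed
  have finPe: "finite Pe" using finP by (simp add: Pe_def)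
  have PU: "P = Pe \<union> Po" and disj: "Pe \<inter> Po = {}" by (auto simp: Pe_def Po_def)
  have "det R n B = finsum R f P" by (simp add: det_alt f_def P_def)
  also have "\<dots> = finsum R f Pe \<oplus> finsum R f Po"
  proof -
    have finPo: "finite Po" using finP by (simp add: Po_def)
    have "finsum R f P = finsum R f (Pe \<union> Po)" by (simp only: PU[symmetric])
    also have "\<dots> = finsum R f Pe \<oplus> finsum R f Po"
      using finPe finPo disj fc by (intro finsum_Un_disjoint) auto
    finally show ?thesis .
  qed
  also have "finsum R f Po = finsum R (\<lambda>p. f (p \<circ> \<tau>)) Pe"
  proof -
    have "finsum R f ((\<lambda>p. p \<circ> \<tau>) ` Pe) = finsum R (\<lambda>p. f (p \<circ> \<tau>)) Pe"
      by (rule finsum_reindex) (use fc inj in auto)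
    then show ?thesis using img by simp
  qed
  also have "finsum R f Pe \<oplus> \<dots> = (\<Oplus>p\<in>Pe. f p \<oplus> f (p \<circ> \<tau>))"
    using fc by (simp add: finsum_addf Pi_def)
  also have "\<dots> = (\<Oplus>p\<in>Pe. \<zero>)"
    using fc key by (intro finsum_cong') (auto simp: Pe_def r_neg)
  also have "\<dots> = \<zero>" by (simp add: finsum_zero)
  finally show ?thesis .
qed

lemma aux1:
  assumes "s \<in> carrier R" "x \<in> carrier R" "y \<in> carrier R" "a \<in> carrier R" "Q \<in> carrier R"
  shows "s \<otimes> ((x \<oplus> a \<otimes> y) \<otimes> Q) = s \<otimes> (x \<otimes> Q) \<oplus> a \<otimes> (s \<otimes> (y \<otimes> Q))"
  using assms by algebra

lemma det_row_add:
  assumes A: "\<And>k l. A k l \<in> carrier R" and ij: "i < n" "j < n" and a: "a \<in> carrier R"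
  shows "det R n (\<lambda>k l. if k = i \<and> l < n then A i l \<oplus> a \<otimes> A j l else A k l)
       = det R n A \<oplus> a \<otimes> det R n (\<lambda>k l. if k = i then A j l else A k l)"
proof -
  let ?Y = "\<lambda>k l. if k = i \<and> l < n then A i l \<oplus> a \<otimes> A j l else A k l"
  let ?A' = "\<lambda>k l. if k = i then A j l else A k l"
  let ?S = "{..<n} - {i}"
  have step: "sgnp p \<otimes> (\<Otimes>k\<in>{..<n}. ?Y k (p k)) =
      sgnp p \<otimes> (\<Otimes>k\<in>{..<n}. A k (p k)) \<oplus> a \<otimes> (sgnp p \<otimes> (\<Otimes>k\<in>{..<n}. ?A' k (p k)))"
    if p: "p permutes {..<n}" for p
  proof -
    have pi: "p i < n" using perm_lt[OF p ij(1)] .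
    have Q: "(\<Otimes>k\<in>?S. ?Y k (p k)) = (\<Otimes>k\<in>?S. A k (p k))"
      using A by (intro finprod_cong') auto
    have Q': "(\<Otimes>k\<in>?S. ?A' k (p k)) = (\<Otimes>k\<in>?S. A k (p k))"
      using A by (intro finprod_cong') auto
    have Qc: "(\<Otimes>k\<in>?S. A k (p k)) \<in> carrier R" using A by (simp add: Pi_def finprod_closed)
    have "(\<Otimes>k\<in>{..<n}. ?Y k (p k)) = ?Y i (p i) \<otimes> (\<Otimes>k\<in>?S. ?Y k (p k))"
      using A a ij by (intro finprod_split) (auto simp: Pi_def)
    moreover have "(\<Otimes>k\<in>{..<n}. A k (p k)) = A i (p i) \<otimes> (\<Otimes>k\<in>?S. A k (p k))"
      using A a ij by (intro finprod_split) (auto simp: Pi_def)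
    moreover have "(\<Otimes>k\<in>{..<n}. ?A' k (p k)) = ?A' i (p i) \<otimes> (\<Otimes>k\<in>?S. ?A' k (p k))"
      using A a ij by (intro finprod_split) (auto simp: Pi_def)
    moreover have e1: "?Y i (p i) = A i (p i) \<oplus> a \<otimes> A j (p i)" using pi by simp
    moreover have e2: "?A' i (p i) = A j (p i)" by simp
    ultimately show ?thesis using Q Q' aux1[OF sgnp_carrier A[of i "p i"] A[of j "p i"] a Qc]
      by simp
  qed
  have "det R n ?Y = (\<Oplus>p\<in>{p. p permutes {..<n}}. sgnp p \<otimes> (\<Otimes>k\<in>{..<n}. A k (p k)) \<oplus> a \<otimes> (sgnp p \<otimes> (\<Otimes>k\<in>{..<n}. ?A' k (p k))))"
    unfolding det_alt using step A a by (intro finsum_cong') (auto simp: Pi_def finprod_closed)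
  also have "\<dots> = det R n A \<oplus> (\<Oplus>p\<in>{p. p permutes {..<n}}. a \<otimes> (sgnp p \<otimes> (\<Otimes>k\<in>{..<n}. ?A' k (p k))))"
    unfolding det_alt using A a by (intro finsum_addf) (auto simp: Pi_def finprod_closed)
  also have "(\<Oplus>p\<in>{p. p permutes {..<n}}. a \<otimes> (sgnp p \<otimes> (\<Otimes>k\<in>{..<n}. ?A' k (p k)))) = a \<otimes> det R n ?A'"
    unfolding det_alt using A a by (intro finsum_rdistr[symmetric]) (auto simp: Pi_def finprod_closed finite_permutations)
  finally show ?thesis .
qed

lemma det_elem_mult:
  assumes M: "is_mat R n M" and ij: "i < n" "j < n" "i \<noteq> j" and a: "a \<in> carrier R"
  shows "det R n (mat_mult R n (elem R i j a) M) = det R n M"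
proof -
  have "det R n (mat_mult R n (elem R i j a) M) = det R n M \<oplus> a \<otimes> det R n (\<lambda>k l. if k = i then M j l else M k l)"
    unfolding elem_mult[OF assms] using is_mat_carrier[OF M] ij a by (intro det_row_add) auto
  also have "det R n (\<lambda>k l. if k = i then M j l else M k l) = \<zero>"
    using is_mat_carrier[OF M] ij by (intro det_alternating[where i=i and j=j]) auto
  finally show ?thesis using M a by simp
qed

end


inductive_set EW :: "('a, 'b) ring_scheme \<Rightarrow> nat \<Rightarrow> (nat \<Rightarrow> nat \<Rightarrow> 'a) set" for R n where
  EW_id: "idm R \<in> EW R n"
| EW_step: "\<lbrakk>i < n; j < n; i \<noteq> j; a \<in> carrier R; x \<in> EW R n\<rbrakk> \<Longrightarrow> mat_mult R n (elem R i j a) x \<in> EW R n"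

context cring
begin

lemma EW_is_mat: "x \<in> EW R n \<Longrightarrow> is_mat R n x"
  by (induction rule: EW.induct) auto

lemma EW_mult: "x \<in> EW R n \<Longrightarrow> y \<in> EW R n \<Longrightarrow> mat_mult R n x y \<in> EW R n"
proof (induction rule: EW.induct)
  case EW_id
  then show ?case using EW_is_mat by simp
next
  case (EW_step i j a x)
  have "mat_mult R n (mat_mult R n (elem R i j a) x) y = mat_mult R n (elem R i j a) (mat_mult R n x y)"
    using EW_step EW_is_mat by (intro mat_mult_assoc) auto
  then show ?case using EW_step by (simp add: EW.EW_step)
qed

lemma elem_EW: "i < n \<Longrightarrow> j < n \<Longrightarrow> i \<noteq> j \<Longrightarrow> a \<in> carrier R \<Longrightarrow> elem R i j a \<in> EW R n"
  using EW_step[OF _ _ _ _ EW_id, of i n j a R] by simp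

lemma EW_mono: "x \<in> EW R n \<Longrightarrow> n \<le> m \<Longrightarrow> x \<in> EW R m"
proof (induction rule: EW.induct)
  case EW_id
  show ?case by (rule EW.EW_id)
next
  case (EW_step i j a x)
  have "mat_mult R m (elem R i j a) x = mat_mult R n (elem R i j a) x"
    using EW_step EW_is_mat by (intro mat_mult_indep) auto
  then show ?case using EW_step EW.EW_step[of i m j a R x] by simp
qed

lemma elem_inv:
  assumes ij: "i < n" "j < n" "i \<noteq> j" and a: "a \<in> carrier R"
  shows "mat_mult R n (elem R i j (\<ominus> a)) (elem R i j a) = idm R"
proof -
  have "mat_mult R n (elem R i j (\<ominus> a)) (elem R i j a) =
     (\<lambda>k l. if k = i \<and> l < n then elem R i j a i l \<oplus> (\<ominus> a) \<otimes> elem R i j a j l else elem R i j a k l)"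
    using assms by (intro elem_mult) auto
  also have "\<dots> = idm R"
  proof (intro ext)
    fix k l
    show "(if k = i \<and> l < n then elem R i j a i l \<oplus> (\<ominus> a) \<otimes> elem R i j a j l else elem R i j a k l) = idm R k l"
      using assms by (cases "k = i"; cases "l = j") (auto simp: elem_def idm_def r_neg)
  qed
  finally show ?thesis .
qed

lemma EW_linv: "x \<in> EW R n \<Longrightarrow> \<exists>y\<in>EW R n. mat_mult R n y x = idm R"
proof (induction rule: EW.induct)
  case EW_id
  show ?case by (rule bexI[of _ "idm R"]) (simp_all add: EW.EW_id)
next
  case (EW_step i j a x)
  then obtain y where y: "y \<in> EW R n" "mat_mult R n y x = idm R" by auto
  let ?e = "elem R i j a" and ?e' = "elem R i j (\<ominus> a)"
  have ym: "is_mat R n y" "is_mat R n x" using y EW_step EW_is_mat by auto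
  have em: "is_mat R n ?e" "is_mat R n ?e'" using EW_step by auto
  have "mat_mult R n (mat_mult R n y ?e') (mat_mult R n ?e x) = mat_mult R n y (mat_mult R n ?e' (mat_mult R n ?e x))"
    using ym em by (intro mat_mult_assoc) auto
  also have "mat_mult R n ?e' (mat_mult R n ?e x) = mat_mult R n (mat_mult R n ?e' ?e) x"
    using ym em by (intro mat_mult_assoc[symmetric]) auto
  also have "mat_mult R n ?e' ?e = idm R" using EW_step by (intro elem_inv) auto
  finally have "mat_mult R n (mat_mult R n y ?e') (mat_mult R n ?e x) = idm R" using ym y by simp
  moreover have "mat_mult R n y ?e' \<in> EW R n" using y EW_step by (intro EW_mult elem_EW) auto
  ultimately show ?case by blast
qed

lemma EW_det: "x \<in> EW R n \<Longrightarrow> is_mat R n Y \<Longrightarrow> det R n (mat_mult R n x Y) = det R n Y"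
proof (induction arbitrary: Y rule: EW.induct)
  case EW_id
  then show ?case by simp
next
  case (EW_step i j a x)
  have xm: "is_mat R n x" using EW_step EW_is_mat by auto
  have "mat_mult R n (mat_mult R n (elem R i j a) x) Y = mat_mult R n (elem R i j a) (mat_mult R n x Y)"
    using EW_step xm by (intro mat_mult_assoc) auto
  moreover have "det R n (mat_mult R n (elem R i j a) (mat_mult R n x Y)) = det R n (mat_mult R n x Y)"
    using EW_step xm by (intro det_elem_mult) auto
  ultimately show ?case using EW_step by simp
qed

lemma EW_SL: "x \<in> EW R n \<Longrightarrow> x \<in> SL R n"
  using EW_det[of x n "idm R"] EW_is_mat[of x n] by (simp add: SL_def)

lemma SL_mult_EW: "x \<in> EW R n \<Longrightarrow> Y \<in> SL R n \<Longrightarrow> mat_mult R n x Y \<in> SL R n"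
  using EW_det[of x n Y] EW_is_mat[of x n] by (simp add: SL_def)

lemma SL_Suc: "A \<in> SL R n \<Longrightarrow> A \<in> SL R (Suc n)"
proof -
  assume A: "A \<in> SL R n"
  then have Am: "is_mat R n A" and d: "det R n A = \<one>" by (auto simp: SL_def)
  have "det R (Suc n) A = det R n A"
  proof (rule det_last)
    show "\<And>i j. A i j \<in> carrier R" using Am by simp
    show "\<And>i. i < n \<Longrightarrow> A i n = \<zero>" using is_mat_out2[OF Am] by (simp add: idm_def)
    show "A n n = \<one>" using is_mat_out2[OF Am] by (simp add: idm_def)
  qed
  then show ?thesis using Am d is_mat_mono[OF Am, of "Suc n"] by (simp add: SL_def)
qed

lemma SL_mono: "A \<in> SL R n \<Longrightarrow> n \<le> m \<Longrightarrow> A \<in> SL R m"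
proof (induction m)
  case 0 then show ?case by simp
next
  case (Suc m)
  show ?case
  proof (cases "n \<le> m")
    case True
    then show ?thesis using Suc SL_Suc by blast
  next
    case False
    then have "n = Suc m" using Suc by simp
    then show ?thesis using Suc by simp
  qed
qed

lemma stab_mult_eq:
  assumes "A \<in> SL R n" "B \<in> SL R n"
  shows "stab_mult R A B = mat_mult R n A B"
proof -
  let ?k = "LEAST k. A \<in> SL R k \<and> B \<in> SL R k"
  have k: "A \<in> SL R ?k \<and> B \<in> SL R ?k" by (rule LeastI[of _ n]) (use assms in auto)
  have kn: "?k \<le> n" by (rule Least_le) (use assms in auto)
  have "mat_mult R n A B = mat_mult R ?k A B"
    using k kn by (intro mat_mult_indep) (auto simp: SL_def)
  then show ?thesis by (simp add: stab_mult_def)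
qed

lemma E_eq_EW: "E R n = EW R n"
proof
  let ?G = "SL_grp R n"
  let ?H = "{elem R i j a | i j a. i < n \<and> j < n \<and> i \<noteq> j \<and> a \<in> carrier R}"
  show "E R n \<subseteq> EW R n"
  proof
    fix x assume "x \<in> E R n"
    then have "x \<in> generate ?G ?H" by (simp add: E_def)
    then show "x \<in> EW R n"
    proof (induction rule: generate.induct)
      case one
      then show ?case by (simp add: SL_grp_def EW.EW_id)
    next
      case (incl h)
      then show ?case by (auto intro: elem_EW)
    next
      case (inv h)
      then obtain i j a where h: "h = elem R i j a" "i < n" "j < n" "i \<noteq> j" "a \<in> carrier R" by auto
      let ?e' = "elem R i j (\<ominus> a)"
      have e'SL: "?e' \<in> SL R n" using h by (intro EW_SL elem_EW) auto
      have hm: "is_mat R n h" "is_mat R n ?e'" using h by auto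
      have c1: "mat_mult R n h ?e' = idm R"
        using elem_inv[of i n j "\<ominus> a"] h by (simp add: a_inv_closed)
      have c2: "mat_mult R n ?e' h = idm R" using elem_inv[of i n j a] h by simp
      have "inv\<^bsub>?G\<^esub> h = ?e'"
        unfolding m_inv_def
      proof (rule the_equality)
        show "?e' \<in> carrier ?G \<and> h \<otimes>\<^bsub>?G\<^esub> ?e' = \<one>\<^bsub>?G\<^esub> \<and> ?e' \<otimes>\<^bsub>?G\<^esub> h = \<one>\<^bsub>?G\<^esub>"
          using e'SL c1 c2 by (simp add: SL_grp_def)
      next
        fix y assume "y \<in> carrier ?G \<and> h \<otimes>\<^bsub>?G\<^esub> y = \<one>\<^bsub>?G\<^esub> \<and> y \<otimes>\<^bsub>?G\<^esub> h = \<one>\<^bsub>?G\<^esub>"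
        then have y: "is_mat R n y" "mat_mult R n y h = idm R" by (auto simp: SL_grp_def SL_def)
        have "y = mat_mult R n y (mat_mult R n h ?e')" using c1 y by simp
        also have "\<dots> = mat_mult R n (mat_mult R n y h) ?e'" using y hm by (intro mat_mult_assoc[symmetric]) auto
        also have "\<dots> = ?e'" using y hm by simp
        finally show "y = ?e'" .
      qed
      then show ?case using h by (auto intro: elem_EW)
    next
      case (eng h1 h2)
      then show ?case by (simp add: SL_grp_def EW_mult)
    qed
  qed
  show "EW R n \<subseteq> E R n"
  proof
    fix x assume "x \<in> EW R n"
    then show "x \<in> E R n"
    proof (induction rule: EW.induct)
      case EW_id
      then show ?case using generate.one[of ?G ?H] by (simp add: E_def SL_grp_def)
    next
      case (EW_step i j a x)
      have "elem R i j a \<in> generate ?G ?H" using EW_step by (intro generate.incl) auto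
      then have "elem R i j a \<otimes>\<^bsub>?G\<^esub> x \<in> generate ?G ?H" using EW_step
        by (intro generate.eng) (auto simp: E_def)
      then show ?case by (simp add: E_def SL_grp_def)
    qed
  qed
qed

lemma E_all_eq: "E_all R = (\<Union>n. EW R n)"
  by (simp add: E_all_def E_eq_EW)

end


context cring
begin

lemma det_col_ideal:
  assumes A: "\<And>i j. A i j \<in> carrier R"
  shows "\<exists>s. (\<forall>i. s i \<in> carrier R) \<and> det R (Suc m) A = (\<Oplus>i\<in>{..<Suc m}. s i \<otimes> A i m)"
proof -
  define J where "J = {x. \<exists>s. (\<forall>i. s i \<in> carrier R) \<and> x = (\<Oplus>i\<in>{..<Suc m}. s i \<otimes> A i m)}"
  have Jc: "x \<in> carrier R" if "x \<in> J" for x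
    using that A by (auto simp: J_def Pi_def intro!: finsum_closed)
  have J0: "\<zero> \<in> J"
  proof -
    have "\<zero> = (\<Oplus>i\<in>{..<Suc m}. \<zero> \<otimes> A i m)" using A by (simp add: finsum_zero)
    then show ?thesis unfolding J_def by (intro CollectI exI[of _ "\<lambda>_. \<zero>"]) auto
  qed
  have Jadd: "x \<oplus> y \<in> J" if xJ: "x \<in> J" and yJ: "y \<in> J" for x y
  proof -
    obtain s where s: "\<forall>i. s i \<in> carrier R" "x = (\<Oplus>i\<in>{..<Suc m}. s i \<otimes> A i m)" using xJ by (auto simp: J_def)
    obtain t where t: "\<forall>i. t i \<in> carrier R" "y = (\<Oplus>i\<in>{..<Suc m}. t i \<otimes> A i m)" using yJ by (auto simp: J_def)
    have "x \<oplus> y = (\<Oplus>i\<in>{..<Suc m}. s i \<otimes> A i m \<oplus> t i \<otimes> A i m)"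
      using s t A by (simp add: finsum_addf Pi_def)
    also have "\<dots> = (\<Oplus>i\<in>{..<Suc m}. (s i \<oplus> t i) \<otimes> A i m)"
      using s t A by (intro finsum_cong') (auto simp: l_distr)
    finally show ?thesis unfolding J_def using s t by (intro CollectI exI[of _ "\<lambda>i. s i \<oplus> t i"]) auto
  qed
  have Jsum: "finite P \<Longrightarrow> (\<forall>p\<in>P. f p \<in> J) \<longrightarrow> finsum R f P \<in> J" for P f
  proof (induction P rule: finite_induct)
    case empty
    then show ?case using J0 by simp
  next
    case (insert p P)
    show ?case
    proof
      assume h: "\<forall>q\<in>insert p P. f q \<in> J"
      have "finsum R f (insert p P) = f p \<oplus> finsum R f P"
        using insert h Jc by (intro finsum_insert) auto
      then show "finsum R f (insert p P) \<in> J" using insert h Jadd by auto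
    qed
  qed
  have Jterm: "sgnp p \<otimes> (\<Otimes>k\<in>{..<Suc m}. A k (p k)) \<in> J" if p: "p permutes {..<Suc m}" for p
  proof -
    obtain k0 where k0: "p k0 = m" using permutes_surj[OF p] by (metis surjD)
    have k0m: "k0 < Suc m"
    proof (rule ccontr)
      assume "\<not> k0 < Suc m"
      then have "p k0 = k0" using permutes_not_in[OF p] by simp
      then show False using k0 \<open>\<not> k0 < Suc m\<close> by simp
    qed
    define Q where "Q = (\<Otimes>k\<in>{..<Suc m} - {k0}. A k (p k))"
    have Qc: "Q \<in> carrier R" using A by (simp add: Q_def Pi_def finprod_closed)
    have "(\<Otimes>k\<in>{..<Suc m}. A k (p k)) = A k0 (p k0) \<otimes> Q"
      unfolding Q_def using A k0m by (intro finprod_split) auto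
    then have e: "sgnp p \<otimes> (\<Otimes>k\<in>{..<Suc m}. A k (p k)) = (sgnp p \<otimes> Q) \<otimes> A k0 m"
      using k0 Qc A by (simp add: m_ac)
    define s where "s = (\<lambda>i. if i = k0 then sgnp p \<otimes> Q else \<zero>)"
    have "(\<Oplus>i\<in>{..<Suc m}. s i \<otimes> A i m) = (\<Oplus>i\<in>{..<Suc m}. if k0 = i then (sgnp p \<otimes> Q) \<otimes> A i m else \<zero>)"
      using A Qc by (intro finsum_cong') (auto simp: s_def)
    also have "\<dots> = (sgnp p \<otimes> Q) \<otimes> A k0 m"
      using k0m A Qc by (intro finsum_singleton) auto
    finally show ?thesis unfolding J_def e using Qc by (intro CollectI exI[of _ s]) (auto simp: s_def)
  qed
  have "det R (Suc m) A \<in> J"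
    unfolding det_alt using Jsum[of "{p. p permutes {..<Suc m}}"] Jterm
    by (simp add: finite_permutations)
  then show ?thesis by (simp add: J_def)
qed

lemma det_one:
  assumes A: "\<And>i j. A i j \<in> carrier R"
  shows "det R 1 A = A 0 0"
proof -
  have P: "{p. p permutes {..<Suc 0}} = {id}" by (auto simp: lessThan_Suc)
  have "(\<Otimes>i\<in>{..<Suc 0}. A i i) = A 0 0" using A by (simp add: lessThan_Suc)
  then show ?thesis using A by (simp add: det_alt P sgnp_def)
qed

lemma perms2: "{p. p permutes {..<2::nat}} = {id, transpose 0 1}"
proof
  show "{id, transpose 0 1} \<subseteq> {p. p permutes {..<2::nat}}"
    by (auto intro: permutes_swap_id)
  show "{p. p permutes {..<2::nat}} \<subseteq> {id, transpose 0 1}"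
  proof
    fix p assume "p \<in> {p. p permutes {..<2::nat}}"
    then have p: "p permutes {..<2::nat}" by simp
    have p0: "p 0 < 2" "p 1 < 2" using perm_lt[OF p] by auto
    have inj: "p 0 \<noteq> p 1" using permutes_inj[OF p] by (metis inj_eq zero_neq_one)
    have out: "p x = x" if "x \<ge> 2" for x using permutes_not_in[OF p] that by simp
    show "p \<in> {id, transpose 0 1}"
    proof (cases "p 0 = 0")
      case True
      then have "p 1 = 1" using p0 inj by auto
      have "p x = id x" for x
      proof -
        consider "x = 0" | "x = 1" | "x \<ge> 2" by linarith
        then show ?thesis using True \<open>p 1 = 1\<close> out by cases auto
      qed
      then have "p = id" by (intro ext)
      then show ?thesis by simp
    next
      case False
      then have a: "p 0 = 1" "p 1 = 0" using p0 inj by auto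
      have "p x = transpose 0 1 x" for x
      proof -
        consider "x = 0" | "x = 1" | "x \<ge> 2" by linarith
        then show ?thesis using a out by cases auto
      qed
      then have "p = transpose 0 1" by (intro ext)
      then show ?thesis by simp
    qed
  qed
qed

lemma det_two:
  assumes A: "\<And>i j. A i j \<in> carrier R"
  shows "det R 2 A = A 0 0 \<otimes> A 1 1 \<oplus> \<ominus> (A 0 1 \<otimes> A 1 0)"
proof -
  have l2: "{..<2::nat} = {0, 1}" by auto
  have ne: "id \<noteq> (transpose 0 1 :: nat \<Rightarrow> nat)" by (metis id_apply transpose_apply_first zero_neq_one)
  have ev: "\<not> evenperm (transpose (0::nat) 1)" by (simp add: evenperm_swap)
  have "det R 2 A = sgnp id \<otimes> (A 0 0 \<otimes> A 1 1) \<oplus> sgnp (transpose 0 1) \<otimes> (A 0 (transpose 0 1 0) \<otimes> A 1 (transpose 0 1 1))"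
  proof -
    have "det R 2 A = (\<Oplus>p\<in>{id, transpose 0 1}. sgnp p \<otimes> (\<Otimes>i\<in>{..<2}. A i (p i)))"
      unfolding det_alt perms2 ..
    then have "det R 2 A = (\<Oplus>p\<in>{id, transpose 0 1}. sgnp p \<otimes> (\<Otimes>i\<in>{0,1}. A i (p i)))"
      unfolding l2 .
    then show ?thesis using A ne by (simp add: finsum_insert finprod_insert)
  qed
  also have "\<dots> = A 0 0 \<otimes> A 1 1 \<oplus> \<ominus> (A 0 1 \<otimes> A 1 0)"
    using A ev by (simp add: sgnp_def l_minus m_comm)
  finally show ?thesis .
qed

end


definition reach :: "('a, 'b) ring_scheme \<Rightarrow> nat \<Rightarrow> (nat \<Rightarrow> nat \<Rightarrow> 'a) \<Rightarrow> (nat \<Rightarrow> nat \<Rightarrow> 'a) \<Rightarrow> bool" where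
  "reach R m Y Z \<longleftrightarrow> (\<exists>g\<in>EW R m. Z = mat_mult R m g Y)"

context cring
begin

lemma reach_refl: "is_mat R m Y \<Longrightarrow> reach R m Y Y"
  unfolding reach_def by (intro bexI[of _ "idm R"]) (auto intro: EW.EW_id)

lemma reach_is_mat: "is_mat R m Y \<Longrightarrow> reach R m Y Z \<Longrightarrow> is_mat R m Z"
  unfolding reach_def using EW_is_mat by auto

lemma reach_trans:
  assumes Y: "is_mat R m Y" and YZ: "reach R m Y Z" and ZW: "reach R m Z W"
  shows "reach R m Y W"
proof -
  obtain g where g: "g \<in> EW R m" "Z = mat_mult R m g Y" using YZ reach_def by blast
  obtain h where h: "h \<in> EW R m" "W = mat_mult R m h Z" using ZW reach_def by blast
  have "W = mat_mult R m (mat_mult R m h g) Y"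
    using g h Y EW_is_mat by (simp add: mat_mult_assoc)
  moreover have "mat_mult R m h g \<in> EW R m" using g h by (intro EW_mult)
  ultimately show ?thesis unfolding reach_def by blast
qed

lemma reach_elem:
  assumes Z: "is_mat R m Z" and ij: "i < m" "j < m" "i \<noteq> j" and a: "a \<in> carrier R"
  shows "reach R m Z (\<lambda>k l. if k = i \<and> l < m then Z i l \<oplus> a \<otimes> Z j l else Z k l)"
  unfolding reach_def using elem_mult[OF Z ij a] elem_EW[OF ij a] by metis

lemma rowadd:
  assumes Y: "is_mat R m Y" and i: "i < m" and w: "\<And>t. w t \<in> carrier R" and wi: "w i = \<zero>"
  shows "q \<le> m \<Longrightarrow> reach R m Y (\<lambda>k l. if k = i \<and> l < m then Y i l \<oplus> (\<Oplus>t\<in>{..<q}. w t \<otimes> Y t l) else Y k l)"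
proof (induction q)
  case 0
  have "(\<lambda>k l. if k = i \<and> l < m then Y i l \<oplus> (\<Oplus>t\<in>{..<0::nat}. w t \<otimes> Y t l) else Y k l) = Y"
    using Y by (intro ext) auto
  then show ?case using reach_refl[OF Y] by simp
next
  case (Suc q)
  define Z where "Z = (\<lambda>k l. if k = i \<and> l < m then Y i l \<oplus> (\<Oplus>t\<in>{..<q}. w t \<otimes> Y t l) else Y k l)"
  have YZ: "reach R m Y Z" using Suc Z_def by simp
  have Zm: "is_mat R m Z" using reach_is_mat[OF Y YZ] .
  have sumS: "(\<Oplus>t\<in>{..<Suc q}. w t \<otimes> Y t l) = w q \<otimes> Y q l \<oplus> (\<Oplus>t\<in>{..<q}. w t \<otimes> Y t l)" for l
    using Y w by (simp add: lessThan_Suc finsum_insert Pi_def)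
  show ?case
  proof (cases "q = i")
    case True
    have "(\<lambda>k l. if k = i \<and> l < m then Y i l \<oplus> (\<Oplus>t\<in>{..<Suc q}. w t \<otimes> Y t l) else Y k l) = Z"
      unfolding Z_def sumS using True wi Y w by (intro ext) (simp add: Pi_def finsum_closed)
    then show ?thesis using YZ by simp
  next
    case False
    have qm: "q < m" using Suc by simp
    have ZW: "reach R m Z (\<lambda>k l. if k = i \<and> l < m then Z i l \<oplus> w q \<otimes> Z q l else Z k l)"
      using reach_elem[OF Zm i qm _ w] False by auto
    have "(\<lambda>k l. if k = i \<and> l < m then Z i l \<oplus> w q \<otimes> Z q l else Z k l)
        = (\<lambda>k l. if k = i \<and> l < m then Y i l \<oplus> (\<Oplus>t\<in>{..<Suc q}. w t \<otimes> Y t l) else Y k l)"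
    proof (intro ext)
      fix k l
      have c: "(\<Oplus>t\<in>{..<q}. w t \<otimes> Y t l) \<in> carrier R" using Y w by (simp add: Pi_def finsum_closed)
      show "(if k = i \<and> l < m then Z i l \<oplus> w q \<otimes> Z q l else Z k l)
          = (if k = i \<and> l < m then Y i l \<oplus> (\<Oplus>t\<in>{..<Suc q}. w t \<otimes> Y t l) else Y k l)"
        unfolding sumS using False c Y w by (auto simp: Z_def a_ac)
    qed
    then show ?thesis using reach_trans[OF Y YZ ZW] by simp
  qed
qed

lemma colclear:
  assumes Y: "is_mat R (Suc n) Y" and Ynn: "Y n n = \<one>"
  shows "q \<le> n \<Longrightarrow> \<exists>Z. reach R (Suc n) Y Z \<and> (\<forall>k<q. Z k n = \<zero>) \<and> Z n n = \<one>"
proof (induction q)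
  case 0
  then show ?case using reach_refl[OF Y] Ynn by auto
next
  case (Suc q)
  then obtain Z where Z: "reach R (Suc n) Y Z" "\<forall>k<q. Z k n = \<zero>" "Z n n = \<one>" by auto
  have Zm: "is_mat R (Suc n) Z" using reach_is_mat[OF Y Z(1)] .
  have qn: "q < n" using Suc by simp
  let ?W = "\<lambda>k l. if k = q \<and> l < Suc n then Z q l \<oplus> (\<ominus> Z q n) \<otimes> Z n l else Z k l"
  have ZW: "reach R (Suc n) Z ?W" using qn Zm by (intro reach_elem) auto
  have "\<forall>k<Suc q. ?W k n = \<zero>" using Z Zm qn by (auto simp: less_Suc_eq r_neg)
  moreover have "?W n n = \<one>" using qn Z by simp
  ultimately show ?case using reach_trans[OF Y Z(1) ZW] by blast
qed

lemma ring_id1: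
  assumes "z \<in> carrier R" "u \<in> carrier R" "v \<in> carrier R" "d0 \<in> carrier R" "d1 \<in> carrier R"
  shows "z \<oplus> (\<one> \<ominus> z) \<otimes> u \<otimes> d0 \<oplus> (\<one> \<ominus> z) \<otimes> v \<otimes> d1 = z \<oplus> (\<one> \<ominus> z) \<otimes> (u \<otimes> d0 \<oplus> v \<otimes> d1)"
  using assms by algebra

lemma ring_id2: "z \<in> carrier R \<Longrightarrow> z \<oplus> (\<one> \<ominus> z) = \<one>"
  by algebra

lemma colred:
  assumes stab: "\<And>a b c \<alpha> \<beta>. a \<in> carrier R \<Longrightarrow> b \<in> carrier R \<Longrightarrow> c \<in> carrier R \<Longrightarrow> \<alpha> \<in> carrier R \<Longrightarrow> \<beta> \<in> carrier R \<Longrightarrow>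
       \<alpha> \<otimes> a \<oplus> \<beta> \<otimes> b \<oplus> c = \<one> \<Longrightarrow>
       \<exists>t0\<in>carrier R. \<exists>t1\<in>carrier R. \<exists>u\<in>carrier R. \<exists>v\<in>carrier R. u \<otimes> (a \<oplus> t0 \<otimes> c) \<oplus> v \<otimes> (b \<oplus> t1 \<otimes> c) = \<one>"
    and Y: "is_mat R (Suc n) Y" and n2: "2 \<le> n" and s: "\<And>i. s i \<in> carrier R"
    and sum: "(\<Oplus>i\<in>{..<Suc n}. s i \<otimes> Y i n) = \<one>"
  shows "\<exists>Z. reach R (Suc n) Y Z \<and> (\<forall>k<n. Z k n = \<zero>) \<and> Z n n = \<one>"
proof -
  let ?m = "Suc n"
  define f where "f = (\<lambda>t::nat. if 2 \<le> t then s t else \<zero>)"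
  have fc: "f t \<in> carrier R" for t using s by (simp add: f_def)
  define x where "x = (\<Oplus>t\<in>{..<?m}. f t \<otimes> Y t n)"
  have xc: "x \<in> carrier R" using fc Y by (simp add: x_def Pi_def finsum_closed)
  have x2: "x = (\<Oplus>t\<in>{2..<?m}. s t \<otimes> Y t n)"
  proof -
    have "x = (\<Oplus>t\<in>{2..<?m}. f t \<otimes> Y t n)"
      unfolding x_def using fc Y by (intro finsum_zero_outside) (auto simp: f_def)
    also have "\<dots> = (\<Oplus>t\<in>{2..<?m}. s t \<otimes> Y t n)"
      using s Y by (intro finsum_cong') (auto simp: f_def)
    finally show ?thesis .
  qed
  have split: "{..<?m} = insert 0 (insert 1 {2..<?m})" using n2 by auto
  have key: "s 0 \<otimes> Y 0 n \<oplus> s 1 \<otimes> Y 1 n \<oplus> x = \<one>"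
  proof -
    have "(\<Oplus>i\<in>{..<?m}. s i \<otimes> Y i n) = s 0 \<otimes> Y 0 n \<oplus> (s 1 \<otimes> Y 1 n \<oplus> (\<Oplus>t\<in>{2..<?m}. s t \<otimes> Y t n))"
      unfolding split using s Y by (simp add: finsum_insert Pi_def)
    then show ?thesis using sum x2 s Y xc by (simp add: a_assoc)
  qed
  obtain t0 t1 u v where tc: "t0 \<in> carrier R" "t1 \<in> carrier R" "u \<in> carrier R" "v \<in> carrier R"
    and uv: "u \<otimes> (Y 0 n \<oplus> t0 \<otimes> x) \<oplus> v \<otimes> (Y 1 n \<oplus> t1 \<otimes> x) = \<one>"
    using stab[OF _ _ xc s[of 0] s[of 1] key] Y by auto
  have sumt: "(\<Oplus>t\<in>{..<?m}. (tt \<otimes> f t) \<otimes> Y t n) = tt \<otimes> x" if tt: "tt \<in> carrier R" for tt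
  proof -
    have "(\<Oplus>t\<in>{..<?m}. (tt \<otimes> f t) \<otimes> Y t n) = (\<Oplus>t\<in>{..<?m}. tt \<otimes> (f t \<otimes> Y t n))"
      using tt fc Y by (intro finsum_cong') (auto simp: m_assoc)
    also have "\<dots> = tt \<otimes> x" unfolding x_def using tt fc Y by (intro finsum_rdistr[symmetric]) (auto simp: Pi_def)
    finally show ?thesis .
  qed
  define Y1 where "Y1 = (\<lambda>k l. if k = 0 \<and> l < ?m then Y 0 l \<oplus> (\<Oplus>t\<in>{..<?m}. (t0 \<otimes> f t) \<otimes> Y t l) else Y k l)"
  have r1: "reach R ?m Y Y1" unfolding Y1_def using tc fc by (intro rowadd[OF Y]) (auto simp: f_def)
  have Y1m: "is_mat R ?m Y1" using reach_is_mat[OF Y r1] .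
  have Y10: "Y1 0 n = Y 0 n \<oplus> t0 \<otimes> x" using sumt[OF tc(1)] by (simp add: Y1_def)
  have Y1o: "Y1 k l = Y k l" if "k \<noteq> 0" for k l using that by (simp add: Y1_def)
  define Y2 where "Y2 = (\<lambda>k l. if k = 1 \<and> l < ?m then Y1 1 l \<oplus> (\<Oplus>t\<in>{..<?m}. (t1 \<otimes> f t) \<otimes> Y1 t l) else Y1 k l)"
  have r2: "reach R ?m Y1 Y2" unfolding Y2_def using tc fc n2 by (intro rowadd[OF Y1m]) (auto simp: f_def)
  have Y2m: "is_mat R ?m Y2" using reach_is_mat[OF Y1m r2] .
  have "(\<Oplus>t\<in>{..<?m}. (t1 \<otimes> f t) \<otimes> Y1 t n) = (\<Oplus>t\<in>{..<?m}. (t1 \<otimes> f t) \<otimes> Y t n)"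
    using tc fc Y Y1m by (intro finsum_cong') (auto simp: Y1o f_def)
  then have Y21: "Y2 1 n = Y 1 n \<oplus> t1 \<otimes> x" using sumt[OF tc(2)] by (simp add: Y2_def Y1o)
  have Y20: "Y2 0 n = Y 0 n \<oplus> t0 \<otimes> x" using Y10 by (simp add: Y2_def)
  have Y2o: "Y2 k l = Y k l" if "k \<noteq> 0" "k \<noteq> 1" for k l using that by (simp add: Y2_def Y1o)
  define e where "e = \<one> \<ominus> Y2 n n"
  have ec: "e \<in> carrier R" using Y2m by (simp add: e_def)
  define Y3 where "Y3 = (\<lambda>k l. if k = n \<and> l < ?m then Y2 n l \<oplus> (e \<otimes> u) \<otimes> Y2 0 l else Y2 k l)"
  have r3: "reach R ?m Y2 Y3" unfolding Y3_def using n2 ec tc by (intro reach_elem[OF Y2m]) auto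
  have Y3m: "is_mat R ?m Y3" using reach_is_mat[OF Y2m r3] .
  define Y4 where "Y4 = (\<lambda>k l. if k = n \<and> l < ?m then Y3 n l \<oplus> (e \<otimes> v) \<otimes> Y3 1 l else Y3 k l)"
  have r4: "reach R ?m Y3 Y4" unfolding Y4_def using n2 ec tc by (intro reach_elem[OF Y3m]) auto
  have Y4m: "is_mat R ?m Y4" using reach_is_mat[OF Y3m r4] .
  have "Y4 n n = Y2 n n \<oplus> (e \<otimes> u) \<otimes> Y2 0 n \<oplus> (e \<otimes> v) \<otimes> Y2 1 n"
    using n2 by (simp add: Y4_def Y3_def)
  also have "\<dots> = Y2 n n \<oplus> e \<otimes> (u \<otimes> Y2 0 n \<oplus> v \<otimes> Y2 1 n)"
    unfolding e_def using ring_id1[of "Y2 n n" u v "Y2 0 n" "Y2 1 n"] Y2m tc by (simp add: m_assoc)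
  also have "u \<otimes> Y2 0 n \<oplus> v \<otimes> Y2 1 n = \<one>" using uv Y20 Y21 by simp
  finally have Y4nn: "Y4 n n = \<one>" using ring_id2[of "Y2 n n"] Y2m by (simp add: e_def)
  obtain Z where Z: "reach R ?m Y4 Z" "\<forall>k<n. Z k n = \<zero>" "Z n n = \<one>"
    using colclear[OF Y4m Y4nn, of n] by auto
  have "reach R ?m Y Z"
    using reach_trans[OF Y r1 reach_trans[OF Y1m r2 reach_trans[OF Y2m r3 reach_trans[OF Y3m r4 Z(1)]]]] .
  then show ?thesis using Z by blast
qed

end


locale qr = cring R + ideal I R for R (structure) and I

sublocale qr \<subseteq> S: cring "R Quot I"
  by (rule quotient_is_cring[OF is_cring])

sublocale qr \<subseteq> H: ring_hom_cring R "R Quot I" "(+>) I"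
  by (rule rcos_ring_hom_cring[OF is_cring])

context qr
begin

lemma h_closed[simp]: "x \<in> carrier R \<Longrightarrow> I +> x \<in> carrier (R Quot I)"
  by simp

lemma lift: "y \<in> carrier (R Quot I) \<Longrightarrow> \<exists>x\<in>carrier R. I +> x = y"
proof -
  assume y: "y \<in> carrier (R Quot I)"
  have "carrier (R Quot I) = a_rcosets I" by (simp only: FactRing_def partial_object.select_convs)
  then have "y \<in> a_rcosets I" using y by simp
  then show ?thesis unfolding A_RCOSETS_def' by blast
qed

lemma h_eq_iff: "x \<in> carrier R \<Longrightarrow> y \<in> carrier R \<Longrightarrow> (I +> x = I +> y) \<longleftrightarrow> x \<ominus> y \<in> I"
  using quotient_eq_iff_same_a_r_cos[OF ideal_axioms] by auto

lemma h_I: "x \<in> I \<Longrightarrow> I +> x = \<zero>\<^bsub>R Quot I\<^esub>"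
proof -
  assume x: "x \<in> I"
  then have xc: "x \<in> carrier R" by (rule Icarr)
  have z: "\<zero> \<in> carrier R" by simp
  have "I +> x = I +> \<zero>" using h_eq_iff[OF xc z] x xc by (simp add: minus_eq)
  then show ?thesis by simp
qed

lemma reduce_idm: "reduce R I (idm R) = idm (R Quot I)"
  by (intro ext) (simp add: reduce_def idm_def)

lemma reduce_is_mat: "is_mat R n A \<Longrightarrow> is_mat (R Quot I) n (reduce R I A)"
  unfolding is_mat_def by (auto simp: reduce_def idm_def)

lemma reduce_carrier: "(\<And>i j. A i j \<in> carrier R) \<Longrightarrow> reduce R I A i j \<in> carrier (R Quot I)"
  by (simp add: reduce_def)

lemma reduce_mult:
  assumes A: "is_mat R n A" and B: "is_mat R n B"
  shows "reduce R I (mat_mult R n A B) = mat_mult (R Quot I) n (reduce R I A) (reduce R I B)"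
proof (intro ext)
  fix i j
  show "reduce R I (mat_mult R n A B) i j = mat_mult (R Quot I) n (reduce R I A) (reduce R I B) i j"
  proof (cases "i < n \<and> j < n")
    case True
    have "I +> (\<Oplus>k\<in>{..<n}. A i k \<otimes> B k j) = (\<Oplus>\<^bsub>R Quot I\<^esub>k\<in>{..<n}. (I +> A i k) \<otimes>\<^bsub>R Quot I\<^esub> (I +> B k j))"
      using A B by (simp add: Pi_def comp_def)
    then show ?thesis using True by (simp add: reduce_def mat_mult_in S.mat_mult_in)
  next
    case False
    then show ?thesis by (simp add: reduce_def mat_mult_out S.mat_mult_out idm_def)
  qed
qed

lemma reduce_elem: "a \<in> carrier R \<Longrightarrow> reduce R I (elem R i j a) = elem (R Quot I) i j (I +> a)"
  by (intro ext) (simp add: reduce_def elem_def idm_def)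

lemma reduce_det:
  assumes A: "\<And>i j. A i j \<in> carrier R"
  shows "det (R Quot I) n (reduce R I A) = I +> det R n A"
proof -
  have "I +> det R n A = (\<Oplus>\<^bsub>R Quot I\<^esub>p\<in>{p. p permutes {..<n}}. I +> (sgnp p \<otimes> (\<Otimes>i\<in>{..<n}. A i (p i))))"
    unfolding det_alt using A by (simp add: Pi_def comp_def finprod_closed del: H.hom_mult)
  also have "\<dots> = (\<Oplus>\<^bsub>R Quot I\<^esub>p\<in>{p. p permutes {..<n}}. S.sgnp p \<otimes>\<^bsub>R Quot I\<^esub> (\<Otimes>\<^bsub>R Quot I\<^esub>i\<in>{..<n}. reduce R I A i (p i)))"
  proof (rule S.finsum_cong')
    fix p
    have "I +> (sgnp p \<otimes> (\<Otimes>i\<in>{..<n}. A i (p i))) = (I +> sgnp p) \<otimes>\<^bsub>R Quot I\<^esub> (I +> (\<Otimes>i\<in>{..<n}. A i (p i)))"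
      using A by (simp add: Pi_def finprod_closed)
    also have "I +> sgnp p = S.sgnp p" by (simp add: sgnp_def S.sgnp_def)
    also have "I +> (\<Otimes>i\<in>{..<n}. A i (p i)) = (\<Otimes>\<^bsub>R Quot I\<^esub>i\<in>{..<n}. reduce R I A i (p i))"
      using H.hom_finprod[of "\<lambda>i. A i (p i)" "{..<n}"] A by (simp add: Pi_def comp_def reduce_def)
    finally show "I +> (sgnp p \<otimes> (\<Otimes>i\<in>{..<n}. A i (p i))) = S.sgnp p \<otimes>\<^bsub>R Quot I\<^esub> (\<Otimes>\<^bsub>R Quot I\<^esub>i\<in>{..<n}. reduce R I A i (p i))" .
  qed (use A in \<open>auto simp: Pi_def reduce_def intro!: S.finprod_closed\<close>)
  also have "\<dots> = det (R Quot I) n (reduce R I A)" by (simp add: S.det_alt)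
  finally show ?thesis by simp
qed

lemma reduce_SL: "A \<in> SL R n \<Longrightarrow> reduce R I A \<in> SL (R Quot I) n"
  using reduce_det[of A n] reduce_is_mat[of n A] by (auto simp: SL_def)

lemma reduce_EW: "x \<in> EW R n \<Longrightarrow> reduce R I x \<in> EW (R Quot I) n"
proof (induction rule: EW.induct)
  case EW_id
  then show ?case by (simp add: reduce_idm EW.EW_id)
next
  case (EW_step i j a x)
  have "reduce R I (mat_mult R n (elem R i j a) x) = mat_mult (R Quot I) n (elem (R Quot I) i j (I +> a)) (reduce R I x)"
    using EW_step EW_is_mat by (simp add: reduce_mult reduce_elem)
  then show ?case using EW_step by (simp add: EW.EW_step)
qed

end


context cring
begin

lemma sum1: "f 0 \<in> carrier R \<Longrightarrow> (\<Oplus>i\<in>{..<1::nat}. f i) = f 0"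
proof -
  assume f: "f 0 \<in> carrier R"
  have e: "{..<1::nat} = {0}" by auto
  show ?thesis unfolding e using f by simp
qed

lemma sum2: "f 0 \<in> carrier R \<Longrightarrow> f 1 \<in> carrier R \<Longrightarrow> (\<Oplus>i\<in>{..<2::nat}. f i) = f 0 \<oplus> f 1"
proof -
  assume f: "f 0 \<in> carrier R" "f 1 \<in> carrier R"
  have e: "{..<2::nat} = insert 0 {1}" by auto
  show ?thesis unfolding e using f by (simp add: finsum_insert)
qed

lemma sum3: "f 0 \<in> carrier R \<Longrightarrow> f 1 \<in> carrier R \<Longrightarrow> f 2 \<in> carrier R \<Longrightarrow>
   (\<Oplus>i\<in>{..<3::nat}. f i) = f 0 \<oplus> f 1 \<oplus> f 2"
proof -
  assume f: "f 0 \<in> carrier R" "f 1 \<in> carrier R" "f 2 \<in> carrier R"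
  have e: "{..<3::nat} = insert 0 (insert 1 {2})" by auto
  show ?thesis unfolding e using f by (simp add: finsum_insert a_assoc)
qed

lemma stable3:
  assumes sr2: "sr_cond R 2"
    and c: "a \<in> carrier R" "b \<in> carrier R" "c \<in> carrier R" "\<alpha> \<in> carrier R" "\<beta> \<in> carrier R" "\<gamma> \<in> carrier R"
    and eq: "\<alpha> \<otimes> a \<oplus> \<beta> \<otimes> b \<oplus> \<gamma> \<otimes> c = \<one>"
  shows "\<exists>s0\<in>carrier R. \<exists>s1\<in>carrier R. \<exists>u\<in>carrier R. \<exists>v\<in>carrier R. u \<otimes> (a \<oplus> s0 \<otimes> c) \<oplus> v \<otimes> (b \<oplus> s1 \<otimes> c) = \<one>"
proof -
  define r where "r = (\<lambda>i::nat. if i = 0 then a else if i = 1 then b else c)"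
  define w where "w = (\<lambda>i::nat. if i = 0 then \<alpha> else if i = 1 then \<beta> else \<gamma>)"
  have rc: "r i \<in> carrier R" for i using c by (simp add: r_def)
  have wc: "w i \<in> carrier R" for i using c by (simp add: w_def)
  have "(\<Oplus>i\<in>{..<3::nat}. w i \<otimes> r i) = \<one>"
    using sum3[of "\<lambda>i. w i \<otimes> r i"] rc wc eq c by (simp add: r_def w_def)
  then have "unimodular R (Suc 2) r"
    unfolding unimodular_def using rc wc by (intro conjI allI impI exI[of _ w]) (auto simp: numeral_3_eq_3)
  then have "stable_row R 2 r" using sr2 by (simp add: sr_cond_def)
  then obtain s where s: "\<forall>i<2. s i \<in> carrier R" "unimodular R 2 (\<lambda>i. r i \<oplus> s i \<otimes> r 2)"
    by (auto simp: stable_row_def)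
  then obtain t where t: "\<forall>i<2. t i \<in> carrier R" "(\<Oplus>i\<in>{..<2}. t i \<otimes> (r i \<oplus> s i \<otimes> r 2)) = \<one>"
    by (auto simp: unimodular_def)
  have tc: "t 0 \<in> carrier R" "t 1 \<in> carrier R" "s 0 \<in> carrier R" "s 1 \<in> carrier R" using t s by auto
  have "t 0 \<otimes> (a \<oplus> s 0 \<otimes> c) \<oplus> t 1 \<otimes> (b \<oplus> s 1 \<otimes> c) = \<one>"
  proof -
    show ?thesis using sum2[of "\<lambda>i. t i \<otimes> (r i \<oplus> s i \<otimes> r 2)"] t(2) tc c by (simp add: r_def)
  qed
  then show ?thesis using tc by blast
qed

lemma aux_sr12:
  assumes "y \<in> carrier R" "s \<in> carrier R" "a \<in> carrier R" "b \<in> carrier R" "c \<in> carrier R" "\<beta> \<in> carrier R" "\<gamma> \<in> carrier R"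
  shows "y \<otimes> (a \<oplus> (s \<otimes> \<gamma>) \<otimes> c) \<oplus> (y \<otimes> s \<otimes> \<beta>) \<otimes> (b \<oplus> \<zero> \<otimes> c) = y \<otimes> (a \<oplus> s \<otimes> (\<beta> \<otimes> b \<oplus> \<gamma> \<otimes> c))"
  using assms by algebra

lemma sr12: "sr_cond R 1 \<Longrightarrow> sr_cond R 2"
  unfolding sr_cond_def
proof (intro allI impI)
  fix r assume sr1: "\<forall>r. unimodular R (Suc 1) r \<longrightarrow> stable_row R 1 r" and u: "unimodular R (Suc 2) r"
  have rc: "r 0 \<in> carrier R" "r 1 \<in> carrier R" "r 2 \<in> carrier R" using u by (auto simp: unimodular_def)
  have rcall: "r i \<in> carrier R" if "i < 3" for i using u that by (auto simp: unimodular_def)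
  obtain w where w: "\<forall>i<3. w i \<in> carrier R" "(\<Oplus>i\<in>{..<3}. w i \<otimes> r i) = \<one>"
    using u by (auto simp: unimodular_def numeral_3_eq_3)
  have wc: "w 0 \<in> carrier R" "w 1 \<in> carrier R" "w 2 \<in> carrier R" using w by auto
  have eq: "w 0 \<otimes> r 0 \<oplus> w 1 \<otimes> r 1 \<oplus> w 2 \<otimes> r 2 = \<one>"
    using sum3[of "\<lambda>i. w i \<otimes> r i"] w rc by simp
  define r' where "r' = (\<lambda>i::nat. if i = 0 then r 0 else w 1 \<otimes> r 1 \<oplus> w 2 \<otimes> r 2)"
  have r'c: "r' i \<in> carrier R" for i using rc wc by (simp add: r'_def)
  define w' where "w' = (\<lambda>i::nat. if i = 0 then w 0 else \<one>)"
  have "(\<Oplus>i\<in>{..<2::nat}. w' i \<otimes> r' i) = \<one>"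
    using sum2[of "\<lambda>i. w' i \<otimes> r' i"] r'c wc eq rc by (simp add: w'_def r'_def a_assoc)
  then have "unimodular R (Suc 1) r'"
    unfolding unimodular_def using r'c wc by (intro conjI allI impI exI[of _ w']) (auto simp: w'_def numeral_2_eq_2)
  then have "stable_row R 1 r'" using sr1 by simp
  then obtain s where s: "s 0 \<in> carrier R" "unimodular R 1 (\<lambda>i. r' i \<oplus> s i \<otimes> r' 1)"
    by (auto simp: stable_row_def)
  then obtain y where y: "y 0 \<in> carrier R" "(\<Oplus>i\<in>{..<1}. y i \<otimes> (r' i \<oplus> s i \<otimes> r' 1)) = \<one>"
    by (auto simp: unimodular_def)
  have y1: "y 0 \<otimes> (r 0 \<oplus> s 0 \<otimes> (w 1 \<otimes> r 1 \<oplus> w 2 \<otimes> r 2)) = \<one>"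
    using sum1[of "\<lambda>i. y i \<otimes> (r' i \<oplus> s i \<otimes> r' 1)"] y s rc wc by (simp add: r'_def)
  define s' where "s' = (\<lambda>i::nat. if i = 0 then s 0 \<otimes> w 2 else \<zero>)"
  define t where "t = (\<lambda>i::nat. if i = 0 then y 0 else y 0 \<otimes> s 0 \<otimes> w 1)"
  have s'c: "s' i \<in> carrier R" for i using s wc by (simp add: s'_def)
  have tc: "t i \<in> carrier R" for i using s wc y by (simp add: t_def)
  have "(\<Oplus>i\<in>{..<2::nat}. t i \<otimes> (r i \<oplus> s' i \<otimes> r 2)) = \<one>"
  proof -
    have "(\<Oplus>i\<in>{..<2::nat}. t i \<otimes> (r i \<oplus> s' i \<otimes> r 2)) =
        y 0 \<otimes> (r 0 \<oplus> (s 0 \<otimes> w 2) \<otimes> r 2) \<oplus> (y 0 \<otimes> s 0 \<otimes> w 1) \<otimes> (r 1 \<oplus> \<zero> \<otimes> r 2)"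
    proof -
      have "(\<Oplus>i\<in>{..<2::nat}. t i \<otimes> (r i \<oplus> s' i \<otimes> r 2)) = t 0 \<otimes> (r 0 \<oplus> s' 0 \<otimes> r 2) \<oplus> t 1 \<otimes> (r 1 \<oplus> s' 1 \<otimes> r 2)"
        by (rule sum2) (use tc s'c rc in auto)
      moreover have "t 0 = y 0" "t 1 = y 0 \<otimes> s 0 \<otimes> w 1" "s' 0 = s 0 \<otimes> w 2" "s' 1 = \<zero>"
        by (simp_all add: t_def s'_def)
      ultimately show ?thesis by simp
    qed
    also have "\<dots> = \<one>" using aux_sr12[of "y 0" "s 0" "r 0" "r 1" "r 2" "w 1" "w 2"] y1 y s rc wc by simp
    finally show ?thesis .
  qed
  then have "unimodular R 2 (\<lambda>i. r i \<oplus> s' i \<otimes> r 2)"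
    unfolding unimodular_def using tc s'c rcall by (intro conjI allI impI exI[of _ t]) auto
  then show "stable_row R 2 r" unfolding stable_row_def using s'c by blast
qed

lemma sr_le2: "sr R \<le> 2 \<Longrightarrow> sr_cond R 2"
proof -
  assume le: "sr R \<le> 2"
  have ex: "\<exists>n>0. sr_cond R n"
  proof (rule ccontr)
    assume "\<not> (\<exists>n>0. sr_cond R n)"
    then have "sr R = \<infinity>" by (simp add: sr_def)
    then show False using le by simp
  qed
  define k where "k = (LEAST n. n > 0 \<and> sr_cond R n)"
  have k: "k > 0 \<and> sr_cond R k" unfolding k_def using ex by (metis (mono_tags, lifting) LeastI)
  have "sr R = enat k" using ex by (simp add: sr_def k_def)
  then have "k \<le> 2" using le by (simp add: numeral_eq_enat)
  then have "k = 1 \<or> k = 2" using k by auto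
  then show ?thesis using k sr12 by auto
qed

end

context qr
begin

lemma stableS:
  assumes sr2: "sr_cond R 2"
    and c: "a \<in> carrier (R Quot I)" "b \<in> carrier (R Quot I)" "c \<in> carrier (R Quot I)"
       "\<alpha> \<in> carrier (R Quot I)" "\<beta> \<in> carrier (R Quot I)"
    and eq: "\<alpha> \<otimes>\<^bsub>R Quot I\<^esub> a \<oplus>\<^bsub>R Quot I\<^esub> \<beta> \<otimes>\<^bsub>R Quot I\<^esub> b \<oplus>\<^bsub>R Quot I\<^esub> c = \<one>\<^bsub>R Quot I\<^esub>"
  shows "\<exists>t0\<in>carrier (R Quot I). \<exists>t1\<in>carrier (R Quot I). \<exists>u\<in>carrier (R Quot I). \<exists>v\<in>carrier (R Quot I).
     u \<otimes>\<^bsub>R Quot I\<^esub> (a \<oplus>\<^bsub>R Quot I\<^esub> t0 \<otimes>\<^bsub>R Quot I\<^esub> c) \<oplus>\<^bsub>R Quot I\<^esub> v \<otimes>\<^bsub>R Quot I\<^esub> (b \<oplus>\<^bsub>R Quot I\<^esub> t1 \<otimes>\<^bsub>R Quot I\<^esub> c) = \<one>\<^bsub>R Quot I\<^esub>"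
proof -
  obtain a' where a': "a' \<in> carrier R" "I +> a' = a" using lift c by blast
  obtain b' where b': "b' \<in> carrier R" "I +> b' = b" using lift c by blast
  obtain c' where c': "c' \<in> carrier R" "I +> c' = c" using lift c by blast
  obtain \<alpha>' where \<alpha>': "\<alpha>' \<in> carrier R" "I +> \<alpha>' = \<alpha>" using lift c by blast
  obtain \<beta>' where \<beta>': "\<beta>' \<in> carrier R" "I +> \<beta>' = \<beta>" using lift c by blast
  define L where "L = \<alpha>' \<otimes> a' \<oplus> \<beta>' \<otimes> b' \<oplus> c'"
  have Lc: "L \<in> carrier R" using a' b' c' \<alpha>' \<beta>' by (simp add: L_def)
  have "I +> L = I +> \<one>" using eq a' b' c' \<alpha>' \<beta>' by (simp add: L_def)
  then have zI: "L \<ominus> \<one> \<in> I" using h_eq_iff[OF Lc one_closed] by simp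
  define z where "z = L \<ominus> \<one>"
  have zc: "z \<in> carrier R" using Lc by (simp add: z_def)
  define c'' where "c'' = c' \<ominus> z"
  have c''c: "c'' \<in> carrier R" using c' zc by (simp add: c''_def)
  have "\<alpha>' \<otimes> a' \<oplus> \<beta>' \<otimes> b' \<oplus> \<one> \<otimes> c'' = \<one>"
    unfolding c''_def z_def L_def using a' b' c' \<alpha>' \<beta>' by algebra
  then obtain s0 s1 u v where sc: "s0 \<in> carrier R" "s1 \<in> carrier R" "u \<in> carrier R" "v \<in> carrier R"
    and uv: "u \<otimes> (a' \<oplus> s0 \<otimes> c'') \<oplus> v \<otimes> (b' \<oplus> s1 \<otimes> c'') = \<one>"
    using stable3[OF sr2 a'(1) b'(1) c''c \<alpha>'(1) \<beta>'(1) one_closed] by blast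
  have "c' = c'' \<oplus> z" unfolding c''_def using c' zc by algebra
  then have "c = (I +> c'') \<oplus>\<^bsub>R Quot I\<^esub> (I +> z)" using c' c''c zc by simp
  also have "I +> z = \<zero>\<^bsub>R Quot I\<^esub>" using h_I zI z_def by simp
  finally have hc: "I +> c'' = c" using c''c by simp
  have "I +> (u \<otimes> (a' \<oplus> s0 \<otimes> c'') \<oplus> v \<otimes> (b' \<oplus> s1 \<otimes> c'')) = \<one>\<^bsub>R Quot I\<^esub>" using uv by simp
  then have "(I +> u) \<otimes>\<^bsub>R Quot I\<^esub> (a \<oplus>\<^bsub>R Quot I\<^esub> (I +> s0) \<otimes>\<^bsub>R Quot I\<^esub> c) \<oplus>\<^bsub>R Quot I\<^esub>
      (I +> v) \<otimes>\<^bsub>R Quot I\<^esub> (b \<oplus>\<^bsub>R Quot I\<^esub> (I +> s1) \<otimes>\<^bsub>R Quot I\<^esub> c) = \<one>\<^bsub>R Quot I\<^esub>"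
    using sc a' b' c''c hc by simp
  then show ?thesis using sc by (meson h_closed)
qed

lemma lift2:
  assumes sr2: "sr_cond R 2"
    and c: "\<gamma> \<in> carrier (R Quot I)" "\<delta> \<in> carrier (R Quot I)" "\<alpha> \<in> carrier (R Quot I)" "\<beta> \<in> carrier (R Quot I)"
    and eq: "\<alpha> \<otimes>\<^bsub>R Quot I\<^esub> \<gamma> \<oplus>\<^bsub>R Quot I\<^esub> \<beta> \<otimes>\<^bsub>R Quot I\<^esub> \<delta> = \<one>\<^bsub>R Quot I\<^esub>"
  shows "\<exists>g\<in>carrier R. \<exists>d\<in>carrier R. \<exists>p\<in>carrier R. \<exists>q\<in>carrier R.
           I +> g = \<gamma> \<and> I +> d = \<delta> \<and> p \<otimes> g \<oplus> q \<otimes> d = \<one>"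
proof -
  obtain g1 where g1: "g1 \<in> carrier R" "I +> g1 = \<gamma>" using lift c by blast
  obtain d1 where d1: "d1 \<in> carrier R" "I +> d1 = \<delta>" using lift c by blast
  obtain a1 where a1: "a1 \<in> carrier R" "I +> a1 = \<alpha>" using lift c by blast
  obtain b1 where b1: "b1 \<in> carrier R" "I +> b1 = \<beta>" using lift c by blast
  define L where "L = a1 \<otimes> g1 \<oplus> b1 \<otimes> d1"
  have Lc: "L \<in> carrier R" using a1 b1 g1 d1 by (simp add: L_def)
  have "I +> L = I +> \<one>" using eq a1 b1 g1 d1 by (simp add: L_def)
  then have zI: "L \<ominus> \<one> \<in> I" using h_eq_iff[OF Lc one_closed] by simp
  define z where "z = L \<ominus> \<one>"
  have zc: "z \<in> carrier R" using Lc by (simp add: z_def)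
  have eqz: "a1 \<otimes> g1 \<oplus> b1 \<otimes> d1 \<oplus> (\<ominus> \<one>) \<otimes> z = \<one>"
    unfolding z_def L_def using a1 b1 g1 d1 by algebra
  obtain s0 s1 p q where sc: "s0 \<in> carrier R" "s1 \<in> carrier R" "p \<in> carrier R" "q \<in> carrier R"
    and pq: "p \<otimes> (g1 \<oplus> s0 \<otimes> z) \<oplus> q \<otimes> (d1 \<oplus> s1 \<otimes> z) = \<one>"
    using stable3[OF sr2 g1(1) d1(1) zc a1(1) b1(1) _ eqz] by auto
  have z0: "I +> (s \<otimes> z) = \<zero>\<^bsub>R Quot I\<^esub>" if "s \<in> carrier R" for s
    using h_I I_l_closed[OF zI that] z_def by simp
  have "I +> (g1 \<oplus> s0 \<otimes> z) = \<gamma>" using z0[OF sc(1)] g1 sc zc c by simp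
  moreover have "I +> (d1 \<oplus> s1 \<otimes> z) = \<delta>" using z0[OF sc(2)] d1 sc zc c by simp
  moreover have "g1 \<oplus> s0 \<otimes> z \<in> carrier R" "d1 \<oplus> s1 \<otimes> z \<in> carrier R" using sc g1 d1 zc by auto
  ultimately show ?thesis using pq sc by blast
qed

end


context cring
begin

lemma H1:
  assumes c: "a \<in> carrier R" "\<beta> \<in> carrier R" "\<gamma> \<in> carrier R" "\<delta> \<in> carrier R"
    and d: "a \<otimes> \<delta> \<oplus> \<ominus> (\<beta> \<otimes> \<gamma>) = \<one>"
  shows "(\<ominus> \<beta>) \<otimes> \<gamma> \<oplus> a \<otimes> \<delta> = \<one>"
proof -
  have "(\<ominus> \<beta>) \<otimes> \<gamma> \<oplus> a \<otimes> \<delta> = a \<otimes> \<delta> \<oplus> \<ominus> (\<beta> \<otimes> \<gamma>)" using c by algebra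
  then show ?thesis using d by simp
qed

lemma H2:
  assumes c: "a \<in> carrier R" "\<beta> \<in> carrier R" "\<gamma> \<in> carrier R" "\<delta> \<in> carrier R" "P \<in> carrier R" "Q \<in> carrier R"
    and d: "a \<otimes> \<delta> \<oplus> \<ominus> (\<beta> \<otimes> \<gamma>) = \<one>" and u: "P \<otimes> \<gamma> \<oplus> Q \<otimes> \<delta> = \<one>"
  shows "Q \<oplus> (a \<otimes> P \<oplus> \<beta> \<otimes> Q) \<otimes> \<gamma> = a"
proof -
  have "(Q \<oplus> (a \<otimes> P \<oplus> \<beta> \<otimes> Q) \<otimes> \<gamma>) \<oplus> Q \<otimes> (a \<otimes> \<delta> \<oplus> \<ominus> (\<beta> \<otimes> \<gamma>)) =
     Q \<oplus> a \<otimes> (P \<otimes> \<gamma> \<oplus> Q \<otimes> \<delta>)"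
    using c by algebra
  then have "(Q \<oplus> (a \<otimes> P \<oplus> \<beta> \<otimes> Q) \<otimes> \<gamma>) \<oplus> Q = a \<oplus> Q" unfolding d u using c by (simp add: a_comm)
  then show ?thesis using c by (simp add: add.right_cancel)
qed

lemma H3:
  assumes c: "a \<in> carrier R" "\<beta> \<in> carrier R" "\<gamma> \<in> carrier R" "\<delta> \<in> carrier R" "P \<in> carrier R" "Q \<in> carrier R"
    and d: "a \<otimes> \<delta> \<oplus> \<ominus> (\<beta> \<otimes> \<gamma>) = \<one>" and u: "P \<otimes> \<gamma> \<oplus> Q \<otimes> \<delta> = \<one>"
  shows "\<ominus> P \<oplus> (a \<otimes> P \<oplus> \<beta> \<otimes> Q) \<otimes> \<delta> = \<beta>"
proof -
  have "(\<ominus> P \<oplus> (a \<otimes> P \<oplus> \<beta> \<otimes> Q) \<otimes> \<delta>) \<oplus> P = \<beta> \<otimes> (P \<otimes> \<gamma> \<oplus> Q \<otimes> \<delta>) \<oplus> P \<otimes> (a \<otimes> \<delta> \<oplus> \<ominus> (\<beta> \<otimes> \<gamma>))"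
    using c by algebra
  then have "(\<ominus> P \<oplus> (a \<otimes> P \<oplus> \<beta> \<otimes> Q) \<otimes> \<delta>) \<oplus> P = \<beta> \<oplus> P" unfolding d u using c by simp
  then show ?thesis using c by (simp add: add.right_cancel)
qed

lemma H4:
  assumes c: "p \<in> carrier R" "q \<in> carrier R" "g \<in> carrier R" "d \<in> carrier R"
    and u: "p \<otimes> g \<oplus> q \<otimes> d = \<one>"
  shows "q \<otimes> d \<oplus> \<ominus> ((\<ominus> p) \<otimes> g) = \<one>"
proof -
  have "q \<otimes> d \<oplus> \<ominus> ((\<ominus> p) \<otimes> g) = p \<otimes> g \<oplus> q \<otimes> d" using c by algebra
  then show ?thesis using u by simp
qed

lemma is_mat_01_idm:
  assumes "is_mat R m b" "m \<le> 1" "m = 1 \<Longrightarrow> b 0 0 = \<one>"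
  shows "b = idm R"
proof (intro ext)
  fix i j
  show "b i j = idm R i j"
  proof (cases "m = 1 \<and> i = 0 \<and> j = 0")
    case True
    then show ?thesis using assms by (simp add: idm_def)
  next
    case False
    then have "m \<le> i \<or> m \<le> j" using assms(2) by auto
    then show ?thesis using assms(1) by (auto simp: is_mat_def)
  qed
qed

end

context qr
begin

lemma h_idm: "I +> idm R i j = idm (R Quot I) i j"
  using fun_cong[OF fun_cong[OF reduce_idm, of i], of j] by (simp add: reduce_def)

lemma base_le1:
  assumes b: "is_mat (R Quot I) m b" "det (R Quot I) m b = \<one>\<^bsub>R Quot I\<^esub>" and m: "m \<le> 1"
  shows "\<exists>e\<in>EW (R Quot I) m. \<exists>A\<in>SL R m. b = mat_mult (R Quot I) m e (reduce R I A)"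
proof -
  have "m = 1 \<Longrightarrow> b 0 0 = \<one>\<^bsub>R Quot I\<^esub>" using b S.det_one[of b] by (simp add: is_mat_def)
  then have bi: "b = idm (R Quot I)" using S.is_mat_01_idm[OF b(1) m] by simp
  have "idm R \<in> SL R m" by (simp add: SL_def)
  moreover have "b = mat_mult (R Quot I) m (idm (R Quot I)) (reduce R I (idm R))"
    using bi by (simp add: reduce_idm)
  ultimately show ?thesis using EW.EW_id by blast
qed

lemma base2:
  assumes sr2: "sr_cond R 2"
    and b: "is_mat (R Quot I) 2 b" "det (R Quot I) 2 b = \<one>\<^bsub>R Quot I\<^esub>"
  shows "\<exists>e\<in>EW (R Quot I) 2. \<exists>A\<in>SL R 2. b = mat_mult (R Quot I) 2 e (reduce R I A)"
proof -
  let ?S = "R Quot I"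
  define a where "a = b 0 0"
  define \<beta> where "\<beta> = b 0 1"
  define \<gamma> where "\<gamma> = b 1 0"
  define \<delta> where "\<delta> = b 1 1"
  have c: "a \<in> carrier ?S" "\<beta> \<in> carrier ?S" "\<gamma> \<in> carrier ?S" "\<delta> \<in> carrier ?S"
    using b(1) by (auto simp: a_def \<beta>_def \<gamma>_def \<delta>_def is_mat_def)
  have d: "a \<otimes>\<^bsub>?S\<^esub> \<delta> \<oplus>\<^bsub>?S\<^esub> \<ominus>\<^bsub>?S\<^esub> (\<beta> \<otimes>\<^bsub>?S\<^esub> \<gamma>) = \<one>\<^bsub>?S\<^esub>"
    using b S.det_two[of b] by (simp add: a_def \<beta>_def \<gamma>_def \<delta>_def is_mat_def)
  have row: "(\<ominus>\<^bsub>?S\<^esub> \<beta>) \<otimes>\<^bsub>?S\<^esub> \<gamma> \<oplus>\<^bsub>?S\<^esub> a \<otimes>\<^bsub>?S\<^esub> \<delta> = \<one>\<^bsub>?S\<^esub>"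
    using S.H1[OF c d] .
  obtain g d' p q where gd: "g \<in> carrier R" "d' \<in> carrier R" "p \<in> carrier R" "q \<in> carrier R"
    and hg: "I +> g = \<gamma>" and hd: "I +> d' = \<delta>" and pq: "p \<otimes> g \<oplus> q \<otimes> d' = \<one>"
    using lift2[OF sr2 c(3) c(4) S.a_inv_closed[OF c(2)] c(1) row] by blast
  define A where "A = (\<lambda>i j. if i = 0 \<and> j = 0 then q else if i = 0 \<and> j = 1 then \<ominus> p
      else if i = 1 \<and> j = 0 then g else if i = 1 \<and> j = 1 then d' else idm R i j)"
  have Am: "is_mat R 2 A" using gd by (auto simp: is_mat_def A_def)
  have "det R 2 A = A 0 0 \<otimes> A 1 1 \<oplus> \<ominus> (A 0 1 \<otimes> A 1 0)"
    by (rule det_two) (use Am in simp)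
  also have "\<dots> = q \<otimes> d' \<oplus> \<ominus> ((\<ominus> p) \<otimes> g)" by (simp add: A_def)
  also have "\<dots> = \<one>" using H4[OF gd(3) gd(4) gd(1) gd(2) pq] .
  finally have ASL: "A \<in> SL R 2" using Am by (simp add: SL_def)
  define P where "P = I +> p"
  define Q where "Q = I +> q"
  have PQc: "P \<in> carrier ?S" "Q \<in> carrier ?S" using gd by (auto simp: P_def Q_def)
  have u: "P \<otimes>\<^bsub>?S\<^esub> \<gamma> \<oplus>\<^bsub>?S\<^esub> Q \<otimes>\<^bsub>?S\<^esub> \<delta> = \<one>\<^bsub>?S\<^esub>"
  proof -
    have "I +> (p \<otimes> g \<oplus> q \<otimes> d') = I +> \<one>" using pq by simp
    then show ?thesis using gd hg hd by (simp add: P_def Q_def)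
  qed
  define x where "x = a \<otimes>\<^bsub>?S\<^esub> P \<oplus>\<^bsub>?S\<^esub> \<beta> \<otimes>\<^bsub>?S\<^esub> Q"
  have xc: "x \<in> carrier ?S" using c PQc by (simp add: x_def)
  define RA where "RA = reduce R I A"
  have RAm: "is_mat ?S 2 RA" using reduce_is_mat[OF Am] by (simp add: RA_def)
  have RA: "RA = (\<lambda>k l. if k = 0 \<and> l = 0 then Q else if k = 0 \<and> l = 1 then \<ominus>\<^bsub>?S\<^esub> P
      else if k = 1 \<and> l = 0 then \<gamma> else if k = 1 \<and> l = 1 then \<delta> else idm ?S k l)"
    by (intro ext) (simp add: RA_def reduce_def A_def P_def Q_def hg hd h_idm gd)
  have e: "elem ?S 0 1 x \<in> EW ?S 2" using xc by (intro S.elem_EW) auto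
  have prod: "mat_mult ?S 2 (elem ?S 0 1 x) RA = (\<lambda>k l. if k = 0 \<and> l < 2 then RA 0 l \<oplus>\<^bsub>?S\<^esub> x \<otimes>\<^bsub>?S\<^esub> RA 1 l else RA k l)"
    using S.elem_mult[OF RAm _ _ _ xc, of 0 1] by simp
  have "mat_mult ?S 2 (elem ?S 0 1 x) RA = b"
  proof (intro ext)
    fix k l :: nat
    consider "k = 0 \<and> l = 0" | "k = 0 \<and> l = 1" | "k = 1 \<and> l = 0" | "k = 1 \<and> l = 1" | "2 \<le> k \<or> 2 \<le> l"
      by linarith
    then show "mat_mult ?S 2 (elem ?S 0 1 x) RA k l = b k l"
    proof cases
      case 1
      then show ?thesis unfolding prod using S.H2[OF c PQc(1) PQc(2) d u] by (simp add: RA x_def a_def)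
    next
      case 2
      then show ?thesis unfolding prod using S.H3[OF c PQc(1) PQc(2) d u] by (simp add: RA x_def \<beta>_def)
    next
      case 3
      then show ?thesis unfolding prod by (simp add: RA \<gamma>_def)
    next
      case 4
      then show ?thesis unfolding prod by (simp add: RA \<delta>_def)
    next
      case 5
      have "RA k l = idm ?S k l" using 5 by (auto simp: RA)
      moreover have "b k l = idm ?S k l" using 5 b(1) by (auto simp: is_mat_def)
      ultimately show ?thesis unfolding prod using 5 by auto
    qed
  qed
  then show ?thesis using e ASL RA_def by metis
qed

end


context qr
begin

lemma step:
  assumes sr2: "sr_cond R 2"
    and b: "is_mat (R Quot I) (Suc n) b" "det (R Quot I) (Suc n) b = \<one>\<^bsub>R Quot I\<^esub>" and n2: "2 \<le> n"
    and IH: "\<And>b'. is_mat (R Quot I) n b' \<Longrightarrow> det (R Quot I) n b' = \<one>\<^bsub>R Quot I\<^esub> \<Longrightarrow>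
              \<exists>e\<in>EW (R Quot I) n. \<exists>A\<in>SL R n. b' = mat_mult (R Quot I) n e (reduce R I A)"
  shows "\<exists>e\<in>EW (R Quot I) (Suc n). \<exists>A\<in>SL R (Suc n). b = mat_mult (R Quot I) (Suc n) e (reduce R I A)"
proof -
  let ?S = "R Quot I"
  let ?m = "Suc n"
  have bc: "\<And>i j. b i j \<in> carrier ?S" using b(1) by simp
  obtain s where s: "\<forall>i. s i \<in> carrier ?S" "det ?S ?m b = (\<Oplus>\<^bsub>?S\<^esub>i\<in>{..<?m}. s i \<otimes>\<^bsub>?S\<^esub> b i n)"
    using S.det_col_ideal[of b n, OF bc] by blast
  obtain Z where Z: "reach ?S ?m b Z" "\<forall>k<n. Z k n = \<zero>\<^bsub>?S\<^esub>" "Z n n = \<one>\<^bsub>?S\<^esub>"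
  proof -
    have sc: "\<And>i. s i \<in> carrier ?S" using s(1) by blast
    have sum1: "(\<Oplus>\<^bsub>?S\<^esub>i\<in>{..<?m}. s i \<otimes>\<^bsub>?S\<^esub> b i n) = \<one>\<^bsub>?S\<^esub>" using s(2) b(2) by simp
    have "\<exists>Z. reach ?S ?m b Z \<and> (\<forall>k<n. Z k n = \<zero>\<^bsub>?S\<^esub>) \<and> Z n n = \<one>\<^bsub>?S\<^esub>"
    proof (rule S.colred[OF _ b(1) n2 sc sum1])
      fix aa bb cc \<alpha> \<beta>
      assume "aa \<in> carrier ?S" "bb \<in> carrier ?S" "cc \<in> carrier ?S" "\<alpha> \<in> carrier ?S" "\<beta> \<in> carrier ?S"
        "\<alpha> \<otimes>\<^bsub>?S\<^esub> aa \<oplus>\<^bsub>?S\<^esub> \<beta> \<otimes>\<^bsub>?S\<^esub> bb \<oplus>\<^bsub>?S\<^esub> cc = \<one>\<^bsub>?S\<^esub>"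
      then show "\<exists>t0\<in>carrier ?S. \<exists>t1\<in>carrier ?S. \<exists>u\<in>carrier ?S. \<exists>v\<in>carrier ?S.
          u \<otimes>\<^bsub>?S\<^esub> (aa \<oplus>\<^bsub>?S\<^esub> t0 \<otimes>\<^bsub>?S\<^esub> cc) \<oplus>\<^bsub>?S\<^esub> v \<otimes>\<^bsub>?S\<^esub> (bb \<oplus>\<^bsub>?S\<^esub> t1 \<otimes>\<^bsub>?S\<^esub> cc) = \<one>\<^bsub>?S\<^esub>"
        by (rule stableS[OF sr2])
    qed
    then show ?thesis using that by blast
  qed
  obtain g where g: "g \<in> EW ?S ?m" "Z = mat_mult ?S ?m g b" using Z(1) by (auto simp: reach_def)
  have Zm: "is_mat ?S ?m Z" using S.reach_is_mat[OF b(1) Z(1)] .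
  have Zc: "\<And>i j. Z i j \<in> carrier ?S" using Zm by simp
  have "det ?S ?m Z = \<one>\<^bsub>?S\<^esub>" using S.EW_det[OF g(1) b(1)] g(2) b(2) by simp
  then have dZ: "det ?S n Z = \<one>\<^bsub>?S\<^esub>" using S.det_last[of Z n] Zc Z by simp
  define b' where "b' = (\<lambda>i j. if i < n \<and> j < n then Z i j else idm ?S i j)"
  have b'm: "is_mat ?S n b'" using Zc by (auto simp: is_mat_def b'_def)
  have "det ?S n b' = det ?S n Z" using Zc by (intro S.det_cong) (auto simp: b'_def)
  then obtain e' A' where e': "e' \<in> EW ?S n" and A': "A' \<in> SL R n"
    and b'eq: "b' = mat_mult ?S n e' (reduce R I A')"
    using IH[OF b'm] dZ by auto
  have A'm: "is_mat R n A'" and dA': "det R n A' = \<one>" using A' by (auto simp: SL_def)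
  have e'm: "is_mat ?S n e'" using S.EW_is_mat[OF e'] .
  define r where "r = (\<lambda>j. SOME x. x \<in> carrier R \<and> I +> x = Z n j)"
  have r: "r j \<in> carrier R \<and> I +> r j = Z n j" for j
  proof -
    obtain x where x: "x \<in> carrier R" "I +> x = Z n j" using lift[OF Zc[of n j]] by blast
    show ?thesis unfolding r_def using x by (intro someI[of "\<lambda>x. x \<in> carrier R \<and> I +> x = Z n j" x]) auto
  qed
  define A'' where "A'' = (\<lambda>i j. if i = n \<and> j < n then r j else A' i j)"
  have A''c: "\<And>i j. A'' i j \<in> carrier R" using r A'm by (simp add: A''_def)
  have A''m: "is_mat R ?m A''"
    unfolding is_mat_def using A''c is_mat_out1[OF A'm] is_mat_out2[OF A'm] by (auto simp: A''_def)
  have "det R ?m A'' = det R n A''"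
  proof (rule det_last)
    show "\<And>i j. A'' i j \<in> carrier R" by (rule A''c)
    show "\<And>i. i < n \<Longrightarrow> A'' i n = \<zero>" using is_mat_out2[OF A'm] by (simp add: A''_def idm_def)
    show "A'' n n = \<one>" using is_mat_out2[OF A'm] by (simp add: A''_def idm_def)
  qed
  also have "\<dots> = det R n A'" using A'm by (intro det_cong) (auto simp: A''_def)
  finally have A''SL: "A'' \<in> SL R ?m" using A''m dA' by (simp add: SL_def)
  define RA where "RA = reduce R I A''"
  have claim: "Z = mat_mult ?S ?m e' RA"
  proof (intro ext)
    fix i j
    show "Z i j = mat_mult ?S ?m e' RA i j"
    proof (cases "i < ?m \<and> j < ?m")
      case False
      then show ?thesis using Zm by (auto simp: S.mat_mult_out is_mat_def)
    next
      case True
      have RAc: "\<And>k l. RA k l \<in> carrier ?S" using A''c by (simp add: RA_def reduce_def)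
      have e'c: "\<And>k l. e' k l \<in> carrier ?S" using e'm by simp
      have mm: "mat_mult ?S ?m e' RA i j = (\<Oplus>\<^bsub>?S\<^esub>k\<in>{..<?m}. e' i k \<otimes>\<^bsub>?S\<^esub> RA k j)"
        using True by (simp add: S.mat_mult_in)
      show ?thesis
      proof (cases "i = n")
        case True2: True
        have "(\<Oplus>\<^bsub>?S\<^esub>k\<in>{..<?m}. e' i k \<otimes>\<^bsub>?S\<^esub> RA k j) = (\<Oplus>\<^bsub>?S\<^esub>k\<in>{..<?m}. idm ?S n k \<otimes>\<^bsub>?S\<^esub> RA k j)"
          using True2 S.is_mat_out1[OF e'm] by simp
        also have "\<dots> = RA n j" using RAc by (intro S.finsum_delta1) auto
        also have "\<dots> = Z n j"
        proof (cases "j < n")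
          case True3: True
          then show ?thesis using r by (simp add: RA_def reduce_def A''_def)
        next
          case False3: False
          then have "j = n" using True by simp
          then show ?thesis using Z(3) is_mat_out2[OF A'm, of n n] by (simp add: RA_def reduce_def A''_def h_idm idm_def)
        qed
        finally show ?thesis using mm True2 by simp
      next
        case False2: False
        then have iN: "i < n" using True by simp
        have "(\<Oplus>\<^bsub>?S\<^esub>k\<in>{..<?m}. e' i k \<otimes>\<^bsub>?S\<^esub> RA k j) =
           e' i n \<otimes>\<^bsub>?S\<^esub> RA n j \<oplus>\<^bsub>?S\<^esub> (\<Oplus>\<^bsub>?S\<^esub>k\<in>{..<n}. e' i k \<otimes>\<^bsub>?S\<^esub> RA k j)"
          using RAc e'c by (simp add: lessThan_Suc S.finsum_insert Pi_def)
        also have "e' i n = \<zero>\<^bsub>?S\<^esub>" using S.is_mat_out2[OF e'm, of n i] iN by (simp add: idm_def)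
        also have "(\<Oplus>\<^bsub>?S\<^esub>k\<in>{..<n}. e' i k \<otimes>\<^bsub>?S\<^esub> RA k j) = (\<Oplus>\<^bsub>?S\<^esub>k\<in>{..<n}. e' i k \<otimes>\<^bsub>?S\<^esub> reduce R I A' k j)"
          using e'c A'm by (intro S.finsum_cong') (auto simp: RA_def reduce_def A''_def Pi_def)
        finally have eq: "mat_mult ?S ?m e' RA i j = (\<Oplus>\<^bsub>?S\<^esub>k\<in>{..<n}. e' i k \<otimes>\<^bsub>?S\<^esub> reduce R I A' k j)"
          using mm RAc e'c A'm by (simp add: reduce_def Pi_def S.finsum_closed)
        show ?thesis
        proof (cases "j < n")
          case True3: True
          have "Z i j = b' i j" using iN True3 by (simp add: b'_def)
          also have "\<dots> = mat_mult ?S n e' (reduce R I A') i j" using b'eq by simp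
          also have "\<dots> = (\<Oplus>\<^bsub>?S\<^esub>k\<in>{..<n}. e' i k \<otimes>\<^bsub>?S\<^esub> reduce R I A' k j)"
            using iN True3 by (simp add: S.mat_mult_in)
          finally show ?thesis using eq by simp
        next
          case False3: False
          then have jn: "j = n" using True by simp
          have "(\<Oplus>\<^bsub>?S\<^esub>k\<in>{..<n}. e' i k \<otimes>\<^bsub>?S\<^esub> reduce R I A' k j) = (\<Oplus>\<^bsub>?S\<^esub>k\<in>{..<n}. \<zero>\<^bsub>?S\<^esub>)"
            using e'c jn is_mat_out2[OF A'm] by (intro S.finsum_cong') (auto simp: reduce_def h_idm idm_def Pi_def)
          also have "\<dots> = \<zero>\<^bsub>?S\<^esub>" by (simp add: S.finsum_zero)
          finally show ?thesis using eq Z(2) iN jn by simp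
        qed
      qed
    qed
  qed
  obtain y where y: "y \<in> EW ?S ?m" "mat_mult ?S ?m y g = idm ?S" using S.EW_linv[OF g(1)] by auto
  have ym: "is_mat ?S ?m y" and gm: "is_mat ?S ?m g" using y g S.EW_is_mat by auto
  have e'M: "e' \<in> EW ?S ?m" using S.EW_mono[OF e'] by simp
  have RAm: "is_mat ?S ?m RA" using reduce_is_mat[OF A''m] by (simp add: RA_def)
  have "b = mat_mult ?S ?m (mat_mult ?S ?m y g) b" using y b(1) by simp
  also have "\<dots> = mat_mult ?S ?m y Z" using ym gm b(1) g(2) by (simp add: S.mat_mult_assoc)
  also have "\<dots> = mat_mult ?S ?m (mat_mult ?S ?m y e') RA"
    using claim ym S.EW_is_mat[OF e'M] RAm by (simp add: S.mat_mult_assoc)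
  finally have "b = mat_mult ?S ?m (mat_mult ?S ?m y e') RA" .
  moreover have "mat_mult ?S ?m y e' \<in> EW ?S ?m" using y e'M by (intro S.EW_mult)
  ultimately show ?thesis using A''SL RA_def by blast
qed

lemma main_lift:
  assumes sr2: "sr_cond R 2"
  shows "is_mat (R Quot I) m b \<Longrightarrow> det (R Quot I) m b = \<one>\<^bsub>R Quot I\<^esub> \<Longrightarrow>
     \<exists>e\<in>EW (R Quot I) m. \<exists>A\<in>SL R m. b = mat_mult (R Quot I) m e (reduce R I A)"
proof (induction m arbitrary: b rule: less_induct)
  case (less m)
  consider "m \<le> 1" | "m = 2" | "3 \<le> m" by linarith
  then show ?case
  proof cases
    case 1
    then show ?thesis using base_le1 less.prems by blast
  next
    case 2
    then show ?thesis using base2[OF sr2] less.prems by blast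
  next
    case 3
    define n where "n = m - 1"
    have mn: "m = Suc n" and n2: "2 \<le> n" using 3 by (auto simp: n_def)
    have IH: "\<And>b'. is_mat (R Quot I) n b' \<Longrightarrow> det (R Quot I) n b' = \<one>\<^bsub>R Quot I\<^esub> \<Longrightarrow>
              \<exists>e\<in>EW (R Quot I) n. \<exists>A\<in>SL R n. b' = mat_mult (R Quot I) n e (reduce R I A)"
      using less.IH[of n] mn by simp
    show ?thesis
      using step[OF sr2 less.prems(1)[unfolded mn] less.prems(2)[unfolded mn] n2 IH] mn by simp
  qed
qed

end


context cring
begin

lemma coset_eq: "H #>\<^bsub>SL_stab R\<^esub> a = {stab_mult R h a | h. h \<in> H}"
  by (auto simp: r_coset_def SL_stab_def)

lemma KL:
  assumes y: "y \<in> SL R N" and g: "g \<in> EW R N"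
  shows "E_all R #>\<^bsub>SL_stab R\<^esub> (mat_mult R N g y) = E_all R #>\<^bsub>SL_stab R\<^esub> y"
proof -
  have ym: "is_mat R N y" using y by (simp add: SL_def)
  have gm: "is_mat R N g" using EW_is_mat[OF g] .
  have "{stab_mult R h (mat_mult R N g y) | h. h \<in> E_all R} = {stab_mult R h y | h. h \<in> E_all R}"
  proof (rule subset_antisym; rule subsetI)
    fix z assume "z \<in> {stab_mult R h (mat_mult R N g y) | h. h \<in> E_all R}"
    then obtain h N' where h: "h \<in> EW R N'" "z = stab_mult R h (mat_mult R N g y)" by (auto simp: E_all_eq)
    define M where "M = max N N'"
    have hM: "h \<in> EW R M" using EW_mono[OF h(1)] by (simp add: M_def)
    have gM: "g \<in> EW R M" using EW_mono[OF g] by (simp add: M_def)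
    have yM: "y \<in> SL R M" using SL_mono[OF y] by (simp add: M_def)
    have gy: "mat_mult R N g y = mat_mult R M g y" using gm ym by (intro mat_mult_indep[symmetric]) (auto simp: M_def)
    have gySL: "mat_mult R M g y \<in> SL R M" using SL_mult_EW[OF gM yM] .
    have "z = mat_mult R M h (mat_mult R M g y)" using h(2) gy stab_mult_eq[OF EW_SL[OF hM] gySL] by simp
    also have "\<dots> = mat_mult R M (mat_mult R M h g) y"
      using EW_is_mat[OF hM] EW_is_mat[OF gM] yM by (intro mat_mult_assoc[symmetric]) (auto simp: SL_def)
    also have "\<dots> = stab_mult R (mat_mult R M h g) y"
      using stab_mult_eq[OF EW_SL[OF EW_mult[OF hM gM]] yM] by simp
    finally have "z = stab_mult R (mat_mult R M h g) y" .
    moreover have "mat_mult R M h g \<in> E_all R" using EW_mult[OF hM gM] by (auto simp: E_all_eq)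
    ultimately show "z \<in> {stab_mult R h y | h. h \<in> E_all R}" by blast
  next
    fix z assume "z \<in> {stab_mult R h y | h. h \<in> E_all R}"
    then obtain h N' where h: "h \<in> EW R N'" "z = stab_mult R h y" by (auto simp: E_all_eq)
    define M where "M = max N N'"
    have hM: "h \<in> EW R M" using EW_mono[OF h(1)] by (simp add: M_def)
    have gM: "g \<in> EW R M" using EW_mono[OF g] by (simp add: M_def)
    have yM: "y \<in> SL R M" using SL_mono[OF y] by (simp add: M_def)
    have ymM: "is_mat R M y" using yM by (simp add: SL_def)
    obtain gi where gi: "gi \<in> EW R M" "mat_mult R M gi g = idm R" using EW_linv[OF gM] by auto
    have gy: "mat_mult R N g y = mat_mult R M g y" using gm ym by (intro mat_mult_indep[symmetric]) (auto simp: M_def)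
    have gySL: "mat_mult R M g y \<in> SL R M" using SL_mult_EW[OF gM yM] .
    have hm: "is_mat R M h" "is_mat R M g" "is_mat R M gi" using hM gM gi EW_is_mat by auto
    have "z = mat_mult R M h y" using h(2) stab_mult_eq[OF EW_SL[OF hM] yM] by simp
    also have "\<dots> = mat_mult R M h (mat_mult R M (mat_mult R M gi g) y)" using gi ymM by simp
    also have "\<dots> = mat_mult R M (mat_mult R M h gi) (mat_mult R M g y)"
      using hm ymM by (simp add: mat_mult_assoc)
    also have "\<dots> = stab_mult R (mat_mult R M h gi) (mat_mult R N g y)"
      using stab_mult_eq[OF EW_SL[OF EW_mult[OF hM gi(1)]] gySL] gy by simp
    finally have "z = stab_mult R (mat_mult R M h gi) (mat_mult R N g y)" .
    moreover have "mat_mult R M h gi \<in> E_all R" using EW_mult[OF hM gi(1)] by (auto simp: E_all_eq)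
    ultimately show "z \<in> {stab_mult R h (mat_mult R N g y) | h. h \<in> E_all R}" by blast
  qed
  then show ?thesis by (simp add: coset_eq)
qed

lemma carrier_SK1: "carrier (SK1 R) = (\<Union>a\<in>SL_all R. {E_all R #>\<^bsub>SL_stab R\<^esub> a})"
  by (simp add: SK1_def FactGroup_def RCOSETS_def SL_stab_def)

lemma SL_all_iff: "A \<in> SL_all R \<longleftrightarrow> (\<exists>n. A \<in> SL R n)"
  by (simp add: SL_all_def)

end

theorem mainTheorem4:
  fixes R :: "'a ring" and I :: "'a set"
  assumes "cring R"
    and "sr R \<le> 2"
    and "ideal I R"
  shows "SK1_map R I ` carrier (SK1 R) = carrier (SK1 (FactRing R I))"
proof -
  interpret qr R I unfolding qr_def using assms(1,3) by simp
  have sr2: "sr_cond R 2" using sr_le2 assms(2) by simp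
  let ?S = "R Quot I"
  show ?thesis
  proof (rule subset_antisym; rule subsetI)
    fix Y assume "Y \<in> SK1_map R I ` carrier (SK1 R)"
    then obtain C where C: "C \<in> carrier (SK1 R)" "Y = SK1_map R I C" by auto
    then obtain A n where A: "A \<in> SL R n" "C = E_all R #>\<^bsub>SL_stab R\<^esub> A"
      by (auto simp: carrier_SK1 SL_all_iff)
    have Am: "is_mat R n A" using A by (simp add: SL_def)
    have "A \<in> C"
    proof -
      have "stab_mult R (idm R) A = A" using stab_mult_eq[OF EW_SL[OF EW.EW_id] A(1)] Am by simp
      moreover have "idm R \<in> E_all R" using EW.EW_id by (auto simp: E_all_eq)
      ultimately show ?thesis using A(2) coset_eq by force
    qed
    then have A'C: "(SOME A'. A' \<in> C) \<in> C" by (rule someI[of "\<lambda>A'. A' \<in> C"])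
    then obtain h N' where h: "h \<in> EW R N'" "(SOME A'. A' \<in> C) = stab_mult R h A"
      using A(2) by (auto simp: coset_eq E_all_eq)
    define M where "M = max n N'"
    have hM: "h \<in> EW R M" using EW_mono[OF h(1)] by (simp add: M_def)
    have AM: "A \<in> SL R M" using SL_mono[OF A(1)] by (simp add: M_def)
    have "(SOME A'. A' \<in> C) = mat_mult R M h A" using h(2) stab_mult_eq[OF EW_SL[OF hM] AM] by simp
    then have "(SOME A'. A' \<in> C) \<in> SL R M" using SL_mult_EW[OF hM AM] by simp
    then have "reduce R I (SOME A'. A' \<in> C) \<in> SL_all ?S" using reduce_SL by (auto simp: S.SL_all_iff)
    then show "Y \<in> carrier (SK1 ?S)" using C(2) by (auto simp: SK1_map_def S.carrier_SK1)
  next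
    fix Y assume "Y \<in> carrier (SK1 ?S)"
    then obtain b m where b: "b \<in> SL ?S m" "Y = E_all ?S #>\<^bsub>SL_stab ?S\<^esub> b"
      by (auto simp: S.carrier_SK1 S.SL_all_iff)
    obtain e A where e: "e \<in> EW ?S m" and A: "A \<in> SL R m" and beq: "b = mat_mult ?S m e (reduce R I A)"
      using main_lift[OF sr2, of m b] b(1) by (auto simp: SL_def)
    define C where "C = E_all R #>\<^bsub>SL_stab R\<^esub> A"
    have Aall: "A \<in> SL_all R" using A by (auto simp: SL_all_iff)
    have Cc: "C \<in> carrier (SK1 R)" unfolding C_def carrier_SK1 using Aall by blast
    have RA: "reduce R I A \<in> SL ?S m" using reduce_SL[OF A] .
    have Y1: "Y = E_all ?S #>\<^bsub>SL_stab ?S\<^esub> reduce R I A" using b(2) beq S.KL[OF RA e] by simp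
    have Am: "is_mat R m A" using A by (simp add: SL_def)
    have "A \<in> C"
    proof -
      have "stab_mult R (idm R) A = A" using stab_mult_eq[OF EW_SL[OF EW.EW_id] A] Am by simp
      moreover have "idm R \<in> E_all R" using EW.EW_id by (auto simp: E_all_eq)
      ultimately show ?thesis using coset_eq C_def by force
    qed
    then have A'C: "(SOME A'. A' \<in> C) \<in> C" by (rule someI[of "\<lambda>A'. A' \<in> C"])
    then obtain h N' where h: "h \<in> EW R N'" "(SOME A'. A' \<in> C) = stab_mult R h A"
      by (auto simp: C_def coset_eq E_all_eq)
    define M where "M = max m N'"
    have hM: "h \<in> EW R M" using EW_mono[OF h(1)] by (simp add: M_def)
    have AM: "A \<in> SL R M" using SL_mono[OF A] by (simp add: M_def)
    have AmM: "is_mat R M A" using AM by (simp add: SL_def)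
    have "(SOME A'. A' \<in> C) = mat_mult R M h A" using h(2) stab_mult_eq[OF EW_SL[OF hM] AM] by simp
    then have red: "reduce R I (SOME A'. A' \<in> C) = mat_mult ?S M (reduce R I h) (reduce R I A)"
      using reduce_mult[OF EW_is_mat[OF hM] AmM] by simp
    have "SK1_map R I C = E_all ?S #>\<^bsub>SL_stab ?S\<^esub> reduce R I (SOME A'. A' \<in> C)"
      by (simp add: SK1_map_def)
    also have "\<dots> = E_all ?S #>\<^bsub>SL_stab ?S\<^esub> reduce R I A"
      unfolding red using S.KL[OF reduce_SL[OF AM] reduce_EW[OF hM]] .
    finally have "Y = SK1_map R I C" using Y1 by simp
    then show "Y \<in> SK1_map R I ` carrier (SK1 R)" using Cc by blast
  qed
qed


end
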